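(* Let $g(k)=1+|k|^2-2\frac{k_1^2}{|k|}$ for $k=(k_1,k_3)\in\mathbb{R}^2$. The mapping $f\mapsto\mathcal{F}^{-1}\big[\frac{1-\chi(k)}{g(k)}\hat f\big]$ defines a bounded linear operator $H^1(\mathbb{R}^2)\to H^3(\mathbb{R}^2)$.
   Context: Fourier transform on $\mathbb{R}^2$: $\hat f(k)=\frac1{2\pi}\int f(x,z)e^{-i(k_1x+k_3z)}dx\,dz$. Fix $\delta\in(0,\frac15)$ and let $\chi$ be the characteristic function of $B=B_\delta(1,0)\cup B_\delta(-1,0)$. (Note $g\ge0$ with equality only at $k=\pm(1,0)$.) *)

theory Defs
  imports "HOL-Analysis.Analysis"
begin

definition L2 :: "(real \<times> real \<Rightarrow> complex) \<Rightarrow> bool" where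
  "L2 f \<longleftrightarrow> f \<in> borel_measurable lborel \<and> integrable lborel (\<lambda>x. (cmod (f x))^2)"

definition ft :: "(real \<times> real \<Rightarrow> complex) \<Rightarrow> real \<times> real \<Rightarrow> complex" where
  "ft \<psi> k = complex_of_real (1 / (2 * pi)) * (LINT x|lborel. \<psi> x * cis (- (fst k * fst x + snd k * snd x)))"

text \<open>phi is the (Plancherel) L^2 Fourier transform of f, characterised by the
  multiplication formula against all test functions in L^1 \<inter> L^2.\<close>
definition is_fourier_L2 :: "(real \<times> real \<Rightarrow> complex) \<Rightarrow> (real \<times> real \<Rightarrow> complex) \<Rightarrow> bool" where
  "is_fourier_L2 f \<phi> \<longleftrightarrow> L2 f \<and> L2 \<phi> \<and>
     (\<forall>\<psi>. integrable lborel \<psi> \<and> L2 \<psi> \<longrightarrow>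
        (LINT k|lborel. \<phi> k * \<psi> k) = (LINT x|lborel. f x * ft \<psi> x))"

definition fourier_L2 :: "(real \<times> real \<Rightarrow> complex) \<Rightarrow> real \<times> real \<Rightarrow> complex" where
  "fourier_L2 f = (SOME \<phi>. is_fourier_L2 f \<phi>)"

definition sobolev_space :: "real \<Rightarrow> (real \<times> real \<Rightarrow> complex) set" where
  "sobolev_space s = {f. L2 f \<and> (\<exists>\<phi>. is_fourier_L2 f \<phi> \<and>
      L2 (\<lambda>k. complex_of_real ((1 + (norm k)^2) powr (s / 2)) * \<phi> k))}"

definition sobolev_norm :: "real \<Rightarrow> (real \<times> real \<Rightarrow> complex) \<Rightarrow> real" where
  "sobolev_norm s f = sqrt (LINT k|lborel. (1 + (norm k)^2) powr s * (cmod (fourier_L2 f k))^2)"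

definition gsym :: "real \<times> real \<Rightarrow> real" where
  "gsym k = 1 + (norm k)^2 - 2 * (fst k)^2 / norm k"

definition chi :: "real \<Rightarrow> real \<times> real \<Rightarrow> real" where
  "chi \<delta> k = indicator (ball (1, 0) \<delta> \<union> ball (-1, 0) \<delta>) k"

definition multiplier :: "real \<Rightarrow> real \<times> real \<Rightarrow> real" where
  "multiplier \<delta> k = (1 - chi \<delta> k) / gsym k"

end

theory Submission
  imports Defs "HOL-Probability.Probability"
begin

lemma norm_sq_pair: "(norm (k::real\<times>real))^2 = (fst k)^2 + (snd k)^2"
  by (cases k) (simp add: norm_Pair)

lemma cintegrable_mult_left_iff:
  fixes f :: "'a \<Rightarrow> complex"
  assumes "c \<noteq> 0"
  shows "integrable M (\<lambda>x. c * f x) \<longleftrightarrow> integrable M f"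
proof
  assume "integrable M (\<lambda>x. c * f x)"
  then have "integrable M (\<lambda>x. (1/c) * (c * f x))" by (rule integrable_mult_right)
  then show "integrable M f" using assms by simp
qed (rule integrable_mult_right)

lemma cintegrable_div_iff:
  fixes f :: "'a \<Rightarrow> complex"
  assumes "c \<noteq> 0"
  shows "integrable M (\<lambda>x. f x / c) \<longleftrightarrow> integrable M f"
  using cintegrable_mult_left_iff[of "1/c" M f] assms by (simp add: field_simps)

lemma (in pair_sigma_finite) integrable_mult_prod:
  fixes f :: "'a \<Rightarrow> 'c::{real_normed_field, banach, second_countable_topology}" and g :: "'b \<Rightarrow> 'c"
  assumes f: "integrable M1 f" and g: "integrable M2 g"
  shows "integrable (M1 \<Otimes>\<^sub>M M2) (\<lambda>(x,y). f x * g y)"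
    and "(\<integral>p. (case p of (x,y) \<Rightarrow> f x * g y) \<partial>(M1 \<Otimes>\<^sub>M M2)) = integral\<^sup>L M1 f * integral\<^sup>L M2 g"
proof -
  have [measurable]: "f \<in> borel_measurable M1" "g \<in> borel_measurable M2"
    using f g by auto
  show I: "integrable (M1 \<Otimes>\<^sub>M M2) (\<lambda>(x,y). f x * g y)"
  proof (rule Fubini_integrable)
    show "integrable M1 (\<lambda>x. \<integral>y. norm (case (x, y) of (x, y) \<Rightarrow> f x * g y) \<partial>M2)"
      using f g by (simp add: norm_mult)
    show "AE x in M1. integrable M2 (\<lambda>y. case (x, y) of (x, y) \<Rightarrow> f x * g y)"
      using g by simp
  qed measurable
  have "(\<integral>p. (case p of (x,y) \<Rightarrow> f x * g y) \<partial>(M1 \<Otimes>\<^sub>M M2)) = (\<integral>x. (\<integral>y. f x * g y \<partial>M2) \<partial>M1)"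
    using integral_fst[of "\<lambda>x y. f x * g y", OF I] by simp
  also have "\<dots> = integral\<^sup>L M1 f * integral\<^sup>L M2 g"
    by simp
  finally show "(\<integral>p. (case p of (x,y) \<Rightarrow> f x * g y) \<partial>(M1 \<Otimes>\<^sub>M M2)) = integral\<^sup>L M1 f * integral\<^sup>L M2 g" .
qed

lemma integrable_mult_R2:
  fixes f g :: "real \<Rightarrow> complex"
  assumes f: "integrable lborel f" and g: "integrable lborel g"
  shows "integrable lborel (\<lambda>k::real\<times>real. f (fst k) * g (snd k))"
    and "(\<integral>k. f (fst k) * g (snd k) \<partial>(lborel::(real\<times>real) measure)) = integral\<^sup>L lborel f * integral\<^sup>L lborel g"
proof -
  have e: "(\<lambda>k::real\<times>real. f (fst k) * g (snd k)) = (\<lambda>(x,y). f x * g y)" by auto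
  show "integrable lborel (\<lambda>k::real\<times>real. f (fst k) * g (snd k))"
    using lborel_pair.integrable_mult_prod(1)[OF f g] unfolding e lborel_prod .
  show "(\<integral>k. f (fst k) * g (snd k) \<partial>(lborel::(real\<times>real) measure)) = integral\<^sup>L lborel f * integral\<^sup>L lborel g"
    using lborel_pair.integrable_mult_prod(2)[OF f g] unfolding e lborel_prod .
qed

lemma integrable_mult_lborel:
  fixes f :: "'a::euclidean_space \<Rightarrow> 'c::{real_normed_field, banach, second_countable_topology}"
    and g :: "'b::euclidean_space \<Rightarrow> 'c"
  assumes f: "integrable lborel f" and g: "integrable lborel g"
  shows "integrable lborel (\<lambda>p. f (fst p) * g (snd p))"
    and "(\<integral>p. f (fst p) * g (snd p) \<partial>lborel) = integral\<^sup>L lborel f * integral\<^sup>L lborel g"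
proof -
  have e: "(\<lambda>p. f (fst p) * g (snd p)) = (\<lambda>(x,y). f x * g y)" by auto
  show "integrable lborel (\<lambda>p. f (fst p) * g (snd p))"
    using lborel_pair.integrable_mult_prod(1)[OF f g] unfolding e lborel_prod .
  show "(\<integral>p. f (fst p) * g (snd p) \<partial>lborel) = integral\<^sup>L lborel f * integral\<^sup>L lborel g"
    using lborel_pair.integrable_mult_prod(2)[OF f g] unfolding e lborel_prod .
qed

lemma gauss1:
  fixes \<epsilon> a :: real
  assumes e: "\<epsilon> > 0"
  shows "has_bochner_integral lborel (\<lambda>t. complex_of_real (exp (-\<epsilon> * t^2)) * cis (a * t))
           (complex_of_real (sqrt (pi / \<epsilon>) * exp (- (a^2) / (4 * \<epsilon>))))"
proof -
  define c where "c = sqrt (2 * \<epsilon>)"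
  have c: "c > 0" "c^2 = 2 * \<epsilon>" using e by (auto simp: c_def)
  define b where "b = a / c"
  define f where "f x = std_normal_density x *\<^sub>R iexp (b * x)" for x
  have fm[measurable]: "f \<in> borel_measurable lborel" unfolding f_def by measurable
  have "char std_normal_distribution b = complex_of_real (exp (- (b^2) / 2))"
    by (simp add: char_std_normal_distribution)
  moreover have "char std_normal_distribution b = integral\<^sup>L lborel f"
    unfolding char_def f_def
    by (subst integral_density) (auto simp: mult.commute)
  ultimately have I: "integral\<^sup>L lborel f = complex_of_real (exp (- (b^2) / 2))" by simp
  then have fi: "integrable lborel f"
    using not_integrable_integral_eq by fastforce
  have fc: "f (0 + c * t) = complex_of_real (1 / sqrt (2*pi)) * (complex_of_real (exp (-\<epsilon> * t^2)) * cis (a * t))" for t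
    using c unfolding f_def b_def
    by (simp add: std_normal_density_def normal_density_def cis_conv_exp power_mult_distrib scaleR_conv_of_real algebra_simps)
  have "integrable lborel (\<lambda>t. f (0 + c * t))"
    using lborel_integrable_real_affine[OF fi, of c 0] c by simp
  then have i2: "integrable lborel (\<lambda>t. complex_of_real (exp (-\<epsilon> * t^2)) * cis (a * t))"
    unfolding fc by (simp add: cintegrable_div_iff)
  have "integral\<^sup>L lborel f = c *\<^sub>R (\<integral>t. f (0 + c * t) \<partial>lborel)"
    using lborel_integral_real_affine[of c f 0] c by simp
  also have "\<dots> = c *\<^sub>R complex_of_real (1 / sqrt (2*pi)) * (\<integral>t. complex_of_real (exp (-\<epsilon> * t^2)) * cis (a * t) \<partial>lborel)"
    unfolding fc by simp
  finally have "(\<integral>t. complex_of_real (exp (-\<epsilon> * t^2)) * cis (a * t) \<partial>lborel) =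
      complex_of_real (sqrt (2*pi) / c * exp (- (b^2) / 2))"
    using c I by (simp add: scaleR_conv_of_real field_simps)
  also have "sqrt (2*pi) / c * exp (- (b^2) / 2) = sqrt (pi / \<epsilon>) * exp (- (a^2) / (4 * \<epsilon>))"
  proof -
    have "sqrt (2*pi) / c = sqrt (pi / \<epsilon>)" using e unfolding c_def
      by (simp add: real_sqrt_divide[symmetric] del: real_sqrt_divide)
    moreover have "b^2/2 = a^2/(4*\<epsilon>)" unfolding b_def using c e
      by (simp add: power_divide)
    ultimately show ?thesis by simp
  qed
  finally show ?thesis using i2 by (simp add: has_bochner_integral_iff)
qed

lemma gauss2:
  fixes \<epsilon> :: real and w :: "real \<times> real"
  assumes e: "\<epsilon> > 0"
  shows "has_bochner_integral lborel (\<lambda>k. complex_of_real (exp (-\<epsilon> * (norm k)^2)) * cis (fst k * fst w + snd k * snd w))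
           (complex_of_real (pi / \<epsilon> * exp (- ((norm w)^2) / (4 * \<epsilon>))))"
proof -
  define F where "F a t = complex_of_real (exp (-\<epsilon> * t^2)) * cis (a * t)" for a t
  have eq: "(\<lambda>k. complex_of_real (exp (-\<epsilon> * (norm k)^2)) * cis (fst k * fst w + snd k * snd w))
      = (\<lambda>k. F (fst w) (fst k) * F (snd w) (snd k))"
  proof (rule ext)
    fix k :: "real \<times> real"
    have "exp (-\<epsilon> * (norm k)^2) = exp (-\<epsilon> * (fst k)^2) * exp (-\<epsilon> * (snd k)^2)"
      by (simp add: norm_sq_pair exp_add[symmetric] algebra_simps)
    moreover have "cis (fst k * fst w + snd k * snd w) = cis (fst w * fst k) * cis (snd w * snd k)"
      by (simp add: cis_mult mult.commute)
    ultimately show "complex_of_real (exp (-\<epsilon> * (norm k)^2)) * cis (fst k * fst w + snd k * snd w) =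
       F (fst w) (fst k) * F (snd w) (snd k)"
      unfolding F_def by simp
  qed
  have g: "has_bochner_integral lborel (F a) (complex_of_real (sqrt (pi / \<epsilon>) * exp (- (a^2) / (4 * \<epsilon>))))" for a
    using gauss1[OF e, of a] unfolding F_def by (simp add: mult.commute)
  have "sqrt (pi / \<epsilon>) * exp (- ((fst w)^2) / (4 * \<epsilon>)) * (sqrt (pi / \<epsilon>) * exp (- ((snd w)^2) / (4 * \<epsilon>)))
      = pi / \<epsilon> * exp (- ((norm w)^2) / (4 * \<epsilon>))"
    using e by (simp add: norm_sq_pair exp_add[symmetric] field_simps)
  then show ?thesis
    unfolding eq using integrable_mult_R2[of "F (fst w)" "F (snd w)"] g
    by (simp add: has_bochner_integral_iff of_real_mult[symmetric] del: of_real_mult)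
qed

lemma nn_integral_affine_eucl:
  fixes f :: "'a::euclidean_space \<Rightarrow> ennreal"
  assumes [measurable]: "f \<in> borel_measurable borel" and c: "c \<noteq> 0"
  shows "(\<integral>\<^sup>+x. f x \<partial>lborel) = ennreal (\<bar>c\<bar>^DIM('a)) * (\<integral>\<^sup>+x. f (t + c *\<^sub>R x) \<partial>lborel)"
  by (subst lborel_affine[OF c, of t])
     (simp add: nn_integral_density nn_integral_distr nn_integral_cmult)

lemma integrable_affine_eucl:
  fixes f :: "'a::euclidean_space \<Rightarrow> 'b::{banach, second_countable_topology}"
  assumes f: "integrable lborel f" and c: "c \<noteq> 0"
  shows "integrable lborel (\<lambda>x. f (t + c *\<^sub>R x))"
  using f f[THEN borel_measurable_integrable] unfolding integrable_iff_bounded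
  by (subst (asm) nn_integral_affine_eucl[where c=c and t=t]) (auto simp: ennreal_mult_less_top c)

lemma integrable_affine_eucl_iff:
  fixes f :: "'a::euclidean_space \<Rightarrow> 'b::{banach, second_countable_topology}"
  assumes c: "c \<noteq> 0"
  shows "integrable lborel (\<lambda>x. f (t + c *\<^sub>R x)) \<longleftrightarrow> integrable lborel f"
proof
  assume "integrable lborel (\<lambda>x. f (t + c *\<^sub>R x))"
  from integrable_affine_eucl[OF this, of "1/c" "- t /\<^sub>R c"] c
  show "integrable lborel f" by (simp add: algebra_simps)
qed (rule integrable_affine_eucl[OF _ c])

lemma integral_affine_eucl:
  fixes f :: "'a::euclidean_space \<Rightarrow> 'b::{banach, second_countable_topology}"
  assumes c: "c \<noteq> 0"
  shows "(\<integral>x. f x \<partial>lborel) = (\<bar>c\<bar>^DIM('a)) *\<^sub>R (\<integral>x. f (t + c *\<^sub>R x) \<partial>lborel)"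
proof cases
  assume f[measurable]: "integrable lborel f" then show ?thesis
    using c f f[THEN borel_measurable_integrable] integrable_affine_eucl[OF f c, of t]
    by (subst lborel_affine[OF c, of t])
       (simp add: integral_density integral_distr)
next
  assume "\<not> integrable lborel f" with c show ?thesis
    by (simp add: integrable_affine_eucl_iff not_integrable_integral_eq)
qed

lemma integral_translate:
  fixes f :: "'a::euclidean_space \<Rightarrow> 'b::{banach, second_countable_topology}"
  shows "(\<integral>x. f (x + w) \<partial>lborel) = (\<integral>x. f x \<partial>lborel)"
  using integral_affine_eucl[where c=1 and f=f and t=w] by (simp add: add.commute)

lemma integrable_translate_iff:
  fixes f :: "'a::euclidean_space \<Rightarrow> 'b::{banach, second_countable_topology}"
  shows "integrable lborel (\<lambda>x. f (x + w)) \<longleftrightarrow> integrable lborel f"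
  using integrable_affine_eucl_iff[where c=1 and t=w and f=f] by (simp add: add.commute)

lemma nn_integral_translate:
  fixes f :: "'a::euclidean_space \<Rightarrow> ennreal"
  assumes [measurable]: "f \<in> borel_measurable borel"
  shows "(\<integral>\<^sup>+x. f (x + w) \<partial>lborel) = (\<integral>\<^sup>+x. f x \<partial>lborel)"
  using nn_integral_affine_eucl[where f=f and c=1 and t=w] by (simp add: add.commute)

lemma integral_reflect:
  fixes f :: "'a::euclidean_space \<Rightarrow> 'b::{banach, second_countable_topology}"
  shows "(\<integral>x. f (- x) \<partial>lborel) = (\<integral>x. f x \<partial>lborel)"
  using integral_affine_eucl[where c="-1" and f=f and t=0] by simp

lemma integrable_reflect_iff:
  fixes f :: "'a::euclidean_space \<Rightarrow> 'b::{banach, second_countable_topology}"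
  shows "integrable lborel (\<lambda>x. f (- x)) \<longleftrightarrow> integrable lborel f"
  using integrable_affine_eucl_iff[where c="-1" and t=0 and f=f] by simp

lemma integral_scale_R2:
  fixes f :: "real \<times> real \<Rightarrow> 'b::{banach, second_countable_topology}"
  assumes "c > 0"
  shows "(\<integral>x. f x \<partial>lborel) = c^2 *\<^sub>R (\<integral>x. f (c *\<^sub>R x) \<partial>lborel)"
  using integral_affine_eucl[where c=c and f=f and t=0] assms by (simp add: power2_eq_square)

lemma integrable_scale_R2_iff:
  fixes f :: "real \<times> real \<Rightarrow> 'b::{banach, second_countable_topology}"
  assumes "c > 0"
  shows "integrable lborel (\<lambda>x. f (c *\<^sub>R x)) \<longleftrightarrow> integrable lborel f"
  using integrable_affine_eucl_iff[where c=c and t=0 and f=f] assms by simp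

lemma compact_inner:
  fixes A :: "'a::euclidean_space set"
  assumes A[measurable]: "A \<in> sets borel" and fin: "emeasure lborel A < \<infinity>" and e: "e > 0"
  obtains K where "compact K" "K \<subseteq> A" "emeasure lborel (A - K) < ennreal e"
proof -
  have e2: "e/2 > 0" using e by simp
  obtain U where U: "open U" "-A \<subseteq> U" "emeasure lborel (U - (-A)) < ennreal (e/2)"
    using outer_regular_lborel[of "-A" "e/2"] e2 by (metis borel_comp A)
  define C where "C n = A - cball (0::'a) (real n)" for n :: nat
  have Cm: "range C \<subseteq> sets lborel" unfolding C_def by auto
  have Cd: "decseq C" unfolding C_def decseq_def
    by auto
  have Cf: "emeasure lborel (C n) \<noteq> \<infinity>" for n
  proof -
    have "emeasure lborel (C n) \<le> emeasure lborel A"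
      by (intro emeasure_mono) (auto simp: C_def)
    then show ?thesis using fin by (auto simp: top_unique)
  qed
  have Ci: "(\<Inter>n. C n) = {}"
  proof -
    { fix x :: 'a
      obtain n :: nat where "norm x \<le> real n" using real_arch_simple by blast
      then have "x \<notin> (\<Inter>n. C n)" by (auto simp: C_def) }
    then show ?thesis by blast
  qed
  have "(\<lambda>n. emeasure lborel (C n)) \<longlonglongrightarrow> 0"
    using Lim_emeasure_decseq[OF Cm Cd Cf] Ci by simp
  then have "eventually (\<lambda>n. emeasure lborel (C n) < ennreal (e/2)) sequentially"
    using e2 by (intro order_tendstoD(2)) auto
  then obtain n where n: "emeasure lborel (C n) < ennreal (e/2)"
    by (auto simp: eventually_sequentially)
  have Ub[measurable]: "U \<in> sets borel" using U(1) by auto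
  define K where "K = (-U) \<inter> cball 0 (real n)"
  have "compact K" unfolding K_def using U(1)
    by (intro closed_Int_compact) auto
  moreover have "K \<subseteq> A" unfolding K_def using U by auto
  moreover have "emeasure lborel (A - K) < ennreal e"
  proof -
    have "A - K \<subseteq> (U - (-A)) \<union> C n" unfolding K_def C_def by auto
    then have "emeasure lborel (A - K) \<le> emeasure lborel ((U - (-A)) \<union> C n)"
      by (intro emeasure_mono) (auto simp: C_def)
    also have "\<dots> \<le> emeasure lborel (U - (-A)) + emeasure lborel (C n)"
      by (intro emeasure_subadditive) (auto simp: C_def)
    also have "\<dots> < emeasure lborel (U - (-A)) + ennreal (e/2)"
      using U(3) n by (subst ennreal_add_left_cancel_less) (auto simp: top_unique)
    also have "\<dots> \<le> ennreal (e/2) + ennreal (e/2)"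
      using U(3) by (intro add_right_mono) auto
    also have "\<dots> = ennreal e" using e by (simp flip: ennreal_plus)
    finally show ?thesis .
  qed
  ultimately show ?thesis using that by blast
qed

lemma transl_indicator:
  fixes A :: "'a::euclidean_space set"
  assumes A[measurable]: "A \<in> sets borel" and fin: "emeasure lborel A < \<infinity>" and e: "e > 0"
  shows "\<exists>d>0. \<forall>w. norm w < d \<longrightarrow> (\<integral>x. \<bar>indicator A (x + w) - indicator A x :: real\<bar> \<partial>lborel) < e"
proof -
  have e8: "e/8 > 0" using e by simp
  obtain U where U: "open U" "A \<subseteq> U" "emeasure lborel (U - A) < ennreal (e/8)"
    using outer_regular_lborel[OF A e8] by blast
  obtain K where K: "compact K" "K \<subseteq> A" "emeasure lborel (A - K) < ennreal (e/8)"
    using compact_inner[OF A fin e8] by blast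
  have Ub[measurable]: "U \<in> sets borel" using U(1) by auto
  have Kb[measurable]: "K \<in> sets borel" using K(1) by (auto intro: borel_closed compact_imp_closed)
  obtain d where d: "d > 0" "\<forall>x\<in>K. \<forall>y\<in>-U. d \<le> dist x y"
    using separate_compact_closed[of K "-U"] K U by auto
  define i1 :: "'a \<Rightarrow> real" where "i1 = indicator (A - K)"
  define i2 :: "'a \<Rightarrow> real" where "i2 = indicator (U - A)"
  have fin1: "emeasure lborel (A - K) < \<infinity>" using K(3) by (simp add: less_trans[OF _ ennreal_less_top])
  have fin2: "emeasure lborel (U - A) < \<infinity>" using U(3) by (simp add: less_trans[OF _ ennreal_less_top])
  have int1: "integrable lborel i1" unfolding i1_def using fin1 by (intro integrable_real_indicator) auto
  have int2: "integrable lborel i2" unfolding i2_def using fin2 by (intro integrable_real_indicator) auto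
  have intA: "integrable lborel (indicator A :: 'a \<Rightarrow> real)" using fin by (intro integrable_real_indicator) auto
  have intAw: "integrable lborel (\<lambda>x. \<bar>indicator A (x + w) - indicator A x :: real\<bar>)" for w
    using intA by (intro integrable_abs integrable_diff) (auto simp: integrable_translate_iff[where f="indicator A"])
  have int1w: "integrable lborel (\<lambda>x. i1 (x + w))" for w using int1 by (simp add: integrable_translate_iff)
  have int2w: "integrable lborel (\<lambda>x. i2 (x + w))" for w using int2 by (simp add: integrable_translate_iff)
  have em1: "emeasure lborel (A - K) = ennreal (measure lborel (A - K))"
    using fin1 by (intro emeasure_eq_ennreal_measure) auto
  have em2: "emeasure lborel (U - A) = ennreal (measure lborel (U - A))"
    using fin2 by (intro emeasure_eq_ennreal_measure) auto
  have m1: "measure lborel (A - K) < e/8"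
    using K(3) e8 unfolding em1 by (simp add: ennreal_less_iff)
  have m2: "measure lborel (U - A) < e/8"
    using U(3) e8 unfolding em2 by (simp add: ennreal_less_iff)
  have I1: "integral\<^sup>L lborel i1 = measure lborel (A - K)" unfolding i1_def by simp
  have I2: "integral\<^sup>L lborel i2 = measure lborel (U - A)" unfolding i2_def by simp
  show ?thesis
  proof (intro exI[of _ d] conjI allI impI d(1))
    fix w :: 'a assume w: "norm w < d"
    have inU: "x + w \<in> U" "x - w \<in> U" if "x \<in> K" for x
    proof -
      have "dist x (x + w) < d" "dist x (x - w) < d" using w by (auto simp: dist_norm)
      then show "x + w \<in> U" "x - w \<in> U" using d(2) that by force+
    qed
    have pw: "\<bar>indicator A (x + w) - indicator A x :: real\<bar> \<le> i1 (x + w) + i2 x + i1 x + i2 (x + w)" for x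
    proof -
      have "x \<in> U" if "x + w \<in> K" using inU(2)[OF that] by simp
      then show ?thesis unfolding i1_def i2_def using inU(1)[of x] U(2)
        by (auto simp: indicator_def)
    qed
    have "(\<integral>x. \<bar>indicator A (x + w) - indicator A x :: real\<bar> \<partial>lborel) \<le>
        (\<integral>x. i1 (x + w) + i2 x + i1 x + i2 (x + w) \<partial>lborel)"
      using pw int1 int2 int1w int2w intAw by (intro integral_mono) auto
    also have "\<dots> = (\<integral>x. i1 (x + w) \<partial>lborel) + integral\<^sup>L lborel i2 + integral\<^sup>L lborel i1 + (\<integral>x. i2 (x + w) \<partial>lborel)"
      using int1 int2 int1w int2w by simp
    also have "\<dots> = 2 * measure lborel (A - K) + 2 * measure lborel (U - A)"
      unfolding integral_translate I1 I2 by simp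
    also have "\<dots> < e" using m1 m2 measure_nonneg[of lborel "A - K"] measure_nonneg[of lborel "U - A"] by linarith
    finally show "(\<integral>x. \<bar>indicator A (x + w) - indicator A x :: real\<bar> \<partial>lborel) < e" .
  qed
qed

definition tcont :: "('a::euclidean_space \<Rightarrow> 'b::real_normed_vector) \<Rightarrow> bool" where
  "tcont f \<longleftrightarrow> (\<forall>e>0. \<exists>d>0. \<forall>w. norm w < d \<longrightarrow> (\<integral>x. norm (f (x + w) - f x) \<partial>lborel) < e)"

lemma integrable_transl_diff:
  fixes f :: "'a::euclidean_space \<Rightarrow> 'b::{banach, second_countable_topology}"
  assumes "integrable lborel f"
  shows "integrable lborel (\<lambda>x. norm (f (x + w) - f x))"
  using assms by (intro integrable_norm integrable_diff) (auto simp: integrable_translate_iff[where f=f])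

lemma transl_cont:
  fixes f :: "'a::euclidean_space \<Rightarrow> 'b::{banach, second_countable_topology}"
  assumes "integrable lborel f"
  shows "tcont f"
  using assms
proof (induct rule: integrable_induct)
  case (base A c)
  have A[measurable]: "A \<in> sets borel" using base by simp
  show ?case unfolding tcont_def
  proof (intro allI impI)
    fix e :: real assume e: "e > 0"
    have nc: "norm c + 1 > 0" using norm_ge_zero[of c] by linarith
    have e': "e / (norm c + 1) > 0" using e nc by (intro divide_pos_pos)
    obtain d where d: "d > 0" "\<And>w. norm w < d \<Longrightarrow> (\<integral>x. \<bar>indicator A (x + w) - indicator A x :: real\<bar> \<partial>lborel) < e / (norm c + 1)"
      using transl_indicator[OF A base(2) e'] by blast
    show "\<exists>d>0. \<forall>w. norm w < d \<longrightarrow> (\<integral>x. norm (indicator A (x + w) *\<^sub>R c - indicator A x *\<^sub>R c) \<partial>lborel) < e"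
    proof (intro exI[of _ d] conjI allI impI d(1))
      fix w :: 'a assume w: "norm w < d"
      have eq: "norm (indicator A (x + w) *\<^sub>R c - indicator A x *\<^sub>R c) = \<bar>indicator A (x + w) - indicator A x :: real\<bar> * norm c" for x
        by (simp add: scaleR_diff_left[symmetric] del: scaleR_diff_left)
      define I where "I = (\<integral>x. \<bar>indicator A (x + w) - indicator A x :: real\<bar> \<partial>lborel)"
      have I0: "I \<ge> 0" unfolding I_def by simp
      have "(\<integral>x. norm (indicator A (x + w) *\<^sub>R c - indicator A x *\<^sub>R c) \<partial>lborel) = I * norm c"
        unfolding eq I_def by simp
      also have "\<dots> \<le> I * (norm c + 1)" using I0 by (simp add: mult_left_mono)
      also have "\<dots> < e / (norm c + 1) * (norm c + 1)"
        using d(2)[OF w] unfolding I_def[symmetric] using nc by (intro mult_strict_right_mono) auto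
      also have "\<dots> = e" using nc by simp
      finally show "(\<integral>x. norm (indicator A (x + w) *\<^sub>R c - indicator A x *\<^sub>R c) \<partial>lborel) < e" .
    qed
  qed
next
  case (add f g)
  show ?case unfolding tcont_def
  proof (intro allI impI)
    fix e :: real assume e: "e > 0"
    obtain d1 where d1: "d1 > 0" "\<And>w. norm w < d1 \<Longrightarrow> (\<integral>x. norm (f (x + w) - f x) \<partial>lborel) < e/2"
      using add(2) e unfolding tcont_def by (meson half_gt_zero)
    obtain d2 where d2: "d2 > 0" "\<And>w. norm w < d2 \<Longrightarrow> (\<integral>x. norm (g (x + w) - g x) \<partial>lborel) < e/2"
      using add(4) e unfolding tcont_def by (meson half_gt_zero)
    show "\<exists>d>0. \<forall>w. norm w < d \<longrightarrow> (\<integral>x. norm ((f (x + w) + g (x + w)) - (f x + g x)) \<partial>lborel) < e"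
    proof (intro exI[of _ "min d1 d2"] conjI allI impI)
      show "min d1 d2 > 0" using d1 d2 by simp
      fix w :: 'a assume w: "norm w < min d1 d2"
      have "(\<integral>x. norm ((f (x + w) + g (x + w)) - (f x + g x)) \<partial>lborel) \<le>
          (\<integral>x. norm (f (x + w) - f x) + norm (g (x + w) - g x) \<partial>lborel)"
      proof (rule integral_mono)
        show "integrable lborel (\<lambda>x. norm ((f (x + w) + g (x + w)) - (f x + g x)))"
          using integrable_transl_diff[of "\<lambda>x. f x + g x", OF Bochner_Integration.integrable_add[OF add(1) add(3)]] by simp
        show "integrable lborel (\<lambda>x. norm (f (x + w) - f x) + norm (g (x + w) - g x))"
          using integrable_transl_diff[OF add(1)] integrable_transl_diff[OF add(3)] by simp
        fix x
        have "(f (x + w) + g (x + w)) - (f x + g x) = (f (x + w) - f x) + (g (x + w) - g x)" by (simp add: algebra_simps)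
        then show "norm ((f (x + w) + g (x + w)) - (f x + g x)) \<le> norm (f (x + w) - f x) + norm (g (x + w) - g x)"
          by (metis norm_triangle_ineq)
      qed
      also have "\<dots> = (\<integral>x. norm (f (x + w) - f x) \<partial>lborel) + (\<integral>x. norm (g (x + w) - g x) \<partial>lborel)"
        using integrable_transl_diff[OF add(1)] integrable_transl_diff[OF add(3)] by simp
      also have "\<dots> < e/2 + e/2" using d1(2) d2(2) w by (intro add_strict_mono) auto
      finally show "(\<integral>x. norm ((f (x + w) + g (x + w)) - (f x + g x)) \<partial>lborel) < e" by simp
    qed
  qed
next
  case (lim f s)
  have fm[measurable]: "f \<in> borel_measurable lborel" using lim(5) by auto
  have sm[measurable]: "s i \<in> borel_measurable lborel" for i using lim(1) by auto
  have conv0: "(\<lambda>i. \<integral>x. norm (s i x - f x) \<partial>lborel) \<longlonglongrightarrow> (\<integral>x. 0 \<partial>(lborel::'a measure))"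
  proof (rule Bochner_Integration.integral_dominated_convergence[where w="\<lambda>x. 3 * norm (f x)" and s="\<lambda>i x. norm (s i x - f x)" and f="\<lambda>x. 0::real" and M=lborel])
    show "integrable lborel (\<lambda>x. 3 * norm (f x))" using lim(5) by auto
    show "AE x in lborel. (\<lambda>i. norm (s i x - f x)) \<longlonglongrightarrow> 0"
      using lim(3) by (auto intro!: tendsto_norm_zero LIM_zero)
    show "AE x in lborel. norm (norm (s i x - f x)) \<le> 3 * norm (f x)" for i
    proof (intro AE_I2)
      fix x
      have "norm (s i x - f x) \<le> norm (s i x) + norm (f x)" by (rule norm_triangle_ineq4)
      then show "norm (norm (s i x - f x)) \<le> 3 * norm (f x)" using lim(4)[of x i] by simp
    qed
  qed auto
  then have conv: "(\<lambda>i. \<integral>x. norm (s i x - f x) \<partial>lborel) \<longlonglongrightarrow> 0" by simp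
  show ?case unfolding tcont_def
  proof (intro allI impI)
    fix e :: real assume e: "e > 0"
    have "eventually (\<lambda>i. (\<integral>x. norm (s i x - f x) \<partial>lborel) < e/3) sequentially"
      using conv e by (intro order_tendstoD(2)) auto
    then obtain i where i: "(\<integral>x. norm (s i x - f x) \<partial>lborel) < e/3"
      by (auto simp: eventually_sequentially)
    obtain d where d: "d > 0" "\<And>w. norm w < d \<Longrightarrow> (\<integral>x. norm (s i (x + w) - s i x) \<partial>lborel) < e/3"
      using lim(2)[of i] e unfolding tcont_def by (metis divide_pos_pos zero_less_numeral)
    have int_sf: "integrable lborel (\<lambda>x. norm (s i x - f x))"
      using lim(1)[of i] lim(5) by auto
    show "\<exists>d>0. \<forall>w. norm w < d \<longrightarrow> (\<integral>x. norm (f (x + w) - f x) \<partial>lborel) < e"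
    proof (intro exI[of _ d] conjI allI impI d(1))
      fix w :: 'a assume w: "norm w < d"
      have int_sfw: "integrable lborel (\<lambda>x. norm (s i (x + w) - f (x + w)))"
        using int_sf by (simp add: integrable_translate_iff[where f="\<lambda>x. norm (s i x - f x)"])
      have "(\<integral>x. norm (f (x + w) - f x) \<partial>lborel) \<le>
          (\<integral>x. norm (s i (x + w) - f (x + w)) + norm (s i (x + w) - s i x) + norm (s i x - f x) \<partial>lborel)"
      proof (intro integral_mono)
        show "integrable lborel (\<lambda>x. norm (f (x + w) - f x))" using integrable_transl_diff[OF lim(5)] .
        show "integrable lborel (\<lambda>x. norm (s i (x + w) - f (x + w)) + norm (s i (x + w) - s i x) + norm (s i x - f x))"
          using int_sf int_sfw integrable_transl_diff[OF lim(1)[of i]] by auto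
        fix x
        have e1: "f (x + w) - f x = (- (s i (x + w) - f (x + w)) + (s i (x + w) - s i x)) + (s i x - f x)"
          by (simp add: algebra_simps)
        have t1: "norm ((- (s i (x + w) - f (x + w)) + (s i (x + w) - s i x)) + (s i x - f x)) \<le> norm (- (s i (x + w) - f (x + w)) + (s i (x + w) - s i x)) + norm (s i x - f x)"
          by (rule norm_triangle_ineq)
        have t2: "norm (- (s i (x + w) - f (x + w)) + (s i (x + w) - s i x)) \<le> norm (s i (x + w) - f (x + w)) + norm (s i (x + w) - s i x)"
          using norm_triangle_ineq[of "- (s i (x + w) - f (x + w))" "s i (x + w) - s i x"] by (simp only: norm_minus_cancel)
        have "norm (f (x + w) - f x) \<le> norm (s i (x + w) - f (x + w)) + norm (s i (x + w) - s i x) + norm (s i x - f x)"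
          unfolding e1 using t1 t2 by linarith
        then show "norm (f (x + w) - f x) \<le> norm (s i (x + w) - f (x + w)) + norm (s i (x + w) - s i x) + norm (s i x - f x)" .
      qed
      also have "\<dots> = (\<integral>x. norm (s i (x + w) - f (x + w)) \<partial>lborel) + (\<integral>x. norm (s i (x + w) - s i x) \<partial>lborel) + (\<integral>x. norm (s i x - f x) \<partial>lborel)"
        using int_sf int_sfw integrable_transl_diff[OF lim(1)[of i]] by simp
      also have "\<dots> = 2 * (\<integral>x. norm (s i x - f x) \<partial>lborel) + (\<integral>x. norm (s i (x + w) - s i x) \<partial>lborel)"
        using integral_translate[where f="\<lambda>x. norm (s i x - f x)" and w=w] by simp
      also have "\<dots> < e" using i d(2)[OF w] by simp
      finally show "(\<integral>x. norm (f (x + w) - f x) \<partial>lborel) < e" .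
    qed
  qed
qed

definition dotp :: "real \<times> real \<Rightarrow> real \<times> real \<Rightarrow> real" where
  "dotp k x = fst k * fst x + snd k * snd x"

lemma ft_dotp: "ft \<psi> k = complex_of_real (1 / (2 * pi)) * (LINT x|lborel. \<psi> x * cis (- dotp k x))"
  unfolding ft_def dotp_def by simp

lemma dotp_diff: "dotp k y - dotp k x = fst k * fst (y - x) + snd k * snd (y - x)"
  unfolding dotp_def by (simp add: algebra_simps)

lemma meas_fst[measurable]: "(\<lambda>x. fst (f x)) \<in> borel_measurable M"
  if "f \<in> borel_measurable M" for f :: "_ \<Rightarrow> real \<times> real"
  by (rule borel_measurable_continuous_on[OF continuous_on_fst[OF continuous_on_id] that])

lemma meas_snd[measurable]: "(\<lambda>x. snd (f x)) \<in> borel_measurable M"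
  if "f \<in> borel_measurable M" for f :: "_ \<Rightarrow> real \<times> real"
  by (rule borel_measurable_continuous_on[OF continuous_on_snd[OF continuous_on_id] that])

lemma meas_cis[measurable]: "(\<lambda>x. cis (f x)) \<in> borel_measurable M"
  if "f \<in> borel_measurable M" for f :: "_ \<Rightarrow> real"
  by (rule borel_measurable_continuous_on[OF _ that]) (auto simp: cis_conv_exp intro!: continuous_intros)

lemma meas_cnj[measurable]: "(\<lambda>x. cnj (f x)) \<in> borel_measurable M"
  if "f \<in> borel_measurable M" for f :: "_ \<Rightarrow> complex"
  by (rule borel_measurable_continuous_on[OF _ that]) (auto intro!: continuous_intros)

lemma measurable_dotp[measurable]: "(\<lambda>p. dotp (f p) (g p)) \<in> borel_measurable M"
  if [measurable]: "f \<in> borel_measurable M" "g \<in> borel_measurable M"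
  unfolding dotp_def by measurable

lemma ft_measurable[measurable]:
  assumes [measurable]: "\<psi> \<in> borel_measurable lborel"
  shows "ft \<psi> \<in> borel_measurable lborel"
proof -
  have "(\<lambda>(k, x). \<psi> x * cis (- dotp k x)) \<in> borel_measurable (lborel \<Otimes>\<^sub>M lborel)"
    by measurable
  then have "(\<lambda>k. LINT x|lborel. \<psi> x * cis (- dotp k x)) \<in> borel_measurable lborel"
    by (rule lborel.borel_measurable_lebesgue_integral)
  then show ?thesis unfolding ft_dotp[abs_def] by measurable
qed

lemma L2_mult_integrable:
  fixes f g :: "'a \<Rightarrow> complex"
  assumes [measurable]: "f \<in> borel_measurable M" "g \<in> borel_measurable M"
    and fi: "integrable M (\<lambda>x. (cmod (f x))^2)" and gi: "integrable M (\<lambda>x. (cmod (g x))^2)"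
  shows "integrable M (\<lambda>x. f x * g x)"
proof (rule Bochner_Integration.integrable_bound[where f="\<lambda>x. ((cmod (f x))^2 + (cmod (g x))^2) / 2"])
  show "integrable M (\<lambda>x. ((cmod (f x))^2 + (cmod (g x))^2) / 2)" using fi gi by auto
  show "AE x in M. norm (f x * g x) \<le> norm (((cmod (f x))^2 + (cmod (g x))^2) / 2)"
  proof (intro AE_I2)
    fix x
    have "2 * (cmod (f x) * cmod (g x)) \<le> (cmod (f x))^2 + (cmod (g x))^2"
      using sum_squares_bound[of "cmod (f x)" "cmod (g x)"] by simp
    then show "norm (f x * g x) \<le> norm (((cmod (f x))^2 + (cmod (g x))^2) / 2)"
      by (simp add: norm_mult)
  qed
qed measurable

lemma gauss_real:
  assumes e: "\<epsilon> > 0"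
  shows "integrable lborel (\<lambda>k::real\<times>real. exp (-\<epsilon> * (norm k)^2))"
    and "(\<integral>k. exp (-\<epsilon> * (norm k)^2) \<partial>(lborel::(real\<times>real) measure)) = pi / \<epsilon>"
proof -
  have h: "has_bochner_integral lborel (\<lambda>k::real\<times>real. complex_of_real (exp (-\<epsilon> * (norm k)^2)))
           (complex_of_real (pi / \<epsilon>))"
    using gauss2[OF e, of 0] by simp
  then show i: "integrable lborel (\<lambda>k::real\<times>real. exp (-\<epsilon> * (norm k)^2))"
    by (simp add: has_bochner_integral_iff complex_of_real_integrable_eq)
  from h have "complex_of_real (\<integral>k. exp (-\<epsilon> * (norm k)^2) \<partial>(lborel::(real\<times>real) measure)) = complex_of_real (pi / \<epsilon>)"
    by (simp add: has_bochner_integral_iff)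
  then show "(\<integral>k. exp (-\<epsilon> * (norm k)^2) \<partial>(lborel::(real\<times>real) measure)) = pi / \<epsilon>"
    by (simp only: of_real_eq_iff)
qed

lemma integrable_mult_cis:
  fixes a :: "'a \<Rightarrow> complex"
  assumes a: "integrable M a" and [measurable]: "f \<in> borel_measurable M"
  shows "integrable M (\<lambda>x. a x * cis (f x))"
proof (rule Bochner_Integration.integrable_bound[where f="\<lambda>x. norm (a x)"])
  show "integrable M (\<lambda>x. norm (a x))" using a by auto
  show "(\<lambda>x. a x * cis (f x)) \<in> borel_measurable M" using a by measurable
  show "AE x in M. norm (a x * cis (f x)) \<le> norm (norm (a x))"
    by (simp add: norm_mult)
qed

lemma ft_prod:
  fixes a b :: "real \<times> real \<Rightarrow> complex"
  assumes a: "integrable lborel a" and b: "integrable lborel b"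
  shows "ft a k * cnj (ft b k) = complex_of_real (1 / (4 * pi^2)) *
     (\<integral>p. (a (fst p) * cnj (b (snd p))) * cis (dotp k (snd p) - dotp k (fst p)) \<partial>lborel)"
proof -
  have [measurable]: "a \<in> borel_measurable lborel" "b \<in> borel_measurable lborel" using a b by auto
  have ia: "integrable lborel (\<lambda>x. a x * cis (- dotp k x))"
    using a by (intro integrable_mult_cis) auto
  have ib: "integrable lborel (\<lambda>y. cnj (b y) * cis (dotp k y))"
    using b by (intro integrable_mult_cis) auto
  have "(\<integral>p. (a (fst p) * cnj (b (snd p))) * cis (dotp k (snd p) - dotp k (fst p)) \<partial>lborel)
      = (\<integral>p. (a (fst p) * cis (- dotp k (fst p))) * (cnj (b (snd p)) * cis (dotp k (snd p))) \<partial>lborel)"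
  proof (intro Bochner_Integration.integral_cong refl)
    fix p :: "(real \<times> real) \<times> (real \<times> real)"
    have "cis (dotp k (snd p) - dotp k (fst p)) = cis (- dotp k (fst p)) * cis (dotp k (snd p))"
      by (simp add: cis_mult)
    then show "(a (fst p) * cnj (b (snd p))) * cis (dotp k (snd p) - dotp k (fst p)) =
      (a (fst p) * cis (- dotp k (fst p))) * (cnj (b (snd p)) * cis (dotp k (snd p)))"
      by (simp add: mult_ac)
  qed
  also have "\<dots> = (\<integral>x. a x * cis (- dotp k x) \<partial>lborel) * (\<integral>y. cnj (b y) * cis (dotp k y) \<partial>lborel)"
    by (rule integrable_mult_lborel(2)[OF ia ib])
  also have "(\<integral>y. cnj (b y) * cis (dotp k y) \<partial>lborel) = cnj (\<integral>y. b y * cis (- dotp k y) \<partial>lborel)"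
  proof -
    have "cnj (\<integral>y. b y * cis (- dotp k y) \<partial>lborel) = (\<integral>y. cnj (b y * cis (- dotp k y)) \<partial>lborel)"
      by (rule Bochner_Integration.integral_cnj[symmetric])
    then show ?thesis by (simp add: cis_cnj)
  qed
  finally have *: "(\<integral>p. (a (fst p) * cnj (b (snd p))) * cis (dotp k (snd p) - dotp k (fst p)) \<partial>lborel)
      = (\<integral>x. a x * cis (- dotp k x) \<partial>lborel) * cnj (\<integral>y. b y * cis (- dotp k y) \<partial>lborel)" .
  show ?thesis unfolding * ft_dotp
    by (simp add: power2_eq_square field_simps)
qed

lemma reg1:
  fixes a b :: "real \<times> real \<Rightarrow> complex"
  assumes a: "integrable lborel a" and b: "integrable lborel b" and e: "\<epsilon> > 0"
  shows "(\<integral>k. ft a k * cnj (ft b k) * complex_of_real (exp (-\<epsilon> * (norm k)^2)) \<partial>lborel) =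
     complex_of_real (1 / (4 * pi * \<epsilon>)) *
     (\<integral>p. a (fst p) * cnj (b (snd p)) * complex_of_real (exp (- ((norm (fst p - snd p))^2) / (4 * \<epsilon>))) \<partial>lborel)"
proof -
  have [measurable]: "a \<in> borel_measurable lborel" "b \<in> borel_measurable lborel" using a b by auto
  define Q where "Q k p = complex_of_real (exp (-\<epsilon> * (norm k)^2)) * (a (fst p) * cnj (b (snd p))) *
      cis (dotp k (snd p) - dotp k (fst p))" for k :: "(real \<times> real)" and p :: "(real \<times> real) \<times> (real \<times> real)"
  have Qm': "(\<lambda>(k, p). Q k p) \<in> borel_measurable (lborel \<Otimes>\<^sub>M (lborel \<Otimes>\<^sub>M lborel))"
    unfolding Q_def by measurable
  have eqM: "(lborel \<Otimes>\<^sub>M (lborel \<Otimes>\<^sub>M lborel) :: ((real\<times>real)\<times>((real\<times>real)\<times>(real\<times>real))) measure)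
      = lborel \<Otimes>\<^sub>M (lborel :: ((real\<times>real)\<times>(real\<times>real)) measure)"
    by (simp only: lborel_prod)
  have Qm[measurable]: "(\<lambda>(k, p). Q k p) \<in> borel_measurable (lborel \<Otimes>\<^sub>M lborel)"
    using Qm' unfolding eqM .
  have iab: "integrable lborel (\<lambda>p::(real\<times>real)\<times>(real\<times>real). norm (a (fst p)) * norm (b (snd p)))"
    using a b by (intro integrable_mult_lborel(1)) auto
  have ig: "integrable lborel (\<lambda>q::(real\<times>real)\<times>((real\<times>real)\<times>(real\<times>real)).
      exp (-\<epsilon> * (norm (fst q))^2) * (norm (a (fst (snd q))) * norm (b (snd (snd q)))))"
    using integrable_mult_lborel(1)[OF gauss_real(1)[OF e] iab] .
  have Qint: "integrable (lborel \<Otimes>\<^sub>M lborel) (\<lambda>(k, p). Q k p)"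
  proof (rule Bochner_Integration.integrable_bound[OF _ Qm])
    show "integrable (lborel \<Otimes>\<^sub>M lborel) (\<lambda>q::(real\<times>real)\<times>((real\<times>real)\<times>(real\<times>real)).
      exp (-\<epsilon> * (norm (fst q))^2) * (norm (a (fst (snd q))) * norm (b (snd (snd q)))))"
      unfolding lborel_prod using ig .
    show "AE x in lborel \<Otimes>\<^sub>M lborel. norm (case x of (k, p) \<Rightarrow> Q k p) \<le>
        norm (exp (-\<epsilon> * (norm (fst x))^2) * (norm (a (fst (snd x))) * norm (b (snd (snd x)))))"
      by (intro AE_I2) (auto simp: Q_def norm_mult)
  qed
  have inner_k: "(\<integral>k. Q k p \<partial>lborel) = (a (fst p) * cnj (b (snd p))) *
      complex_of_real (pi / \<epsilon> * exp (- ((norm (fst p - snd p))^2) / (4 * \<epsilon>)))" for p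
  proof -
    have "(\<integral>k. Q k p \<partial>lborel) = (a (fst p) * cnj (b (snd p))) *
      (\<integral>k. complex_of_real (exp (-\<epsilon> * (norm k)^2)) * cis (fst k * fst (snd p - fst p) + snd k * snd (snd p - fst p)) \<partial>lborel)"
      unfolding Q_def dotp_diff by (simp add: algebra_simps)
    also have "(\<integral>k. complex_of_real (exp (-\<epsilon> * (norm k)^2)) * cis (fst k * fst (snd p - fst p) + snd k * snd (snd p - fst p)) \<partial>lborel)
        = complex_of_real (pi / \<epsilon> * exp (- ((norm (snd p - fst p))^2) / (4 * \<epsilon>)))"
      using gauss2[OF e, of "snd p - fst p"] by (simp add: has_bochner_integral_iff)
    finally show ?thesis by (simp add: norm_minus_commute)
  qed
  have "(\<integral>k. ft a k * cnj (ft b k) * complex_of_real (exp (-\<epsilon> * (norm k)^2)) \<partial>lborel)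
      = (\<integral>k. complex_of_real (1 / (4 * pi^2)) * (\<integral>p. Q k p \<partial>lborel) \<partial>lborel)"
  proof (intro Bochner_Integration.integral_cong refl)
    fix k :: "real \<times> real"
    have "(\<integral>p. Q k p \<partial>lborel) = complex_of_real (exp (-\<epsilon> * (norm k)^2)) *
        (\<integral>p. (a (fst p) * cnj (b (snd p))) * cis (dotp k (snd p) - dotp k (fst p)) \<partial>lborel)"
      unfolding Q_def mult.assoc by (rule integral_mult_right_zero)
    then show "ft a k * cnj (ft b k) * complex_of_real (exp (-\<epsilon> * (norm k)^2)) =
        complex_of_real (1 / (4 * pi^2)) * (\<integral>p. Q k p \<partial>lborel)"
      unfolding ft_prod[OF a b] by (simp only: mult_ac)
  qed
  also have "\<dots> = complex_of_real (1 / (4 * pi^2)) * (\<integral>k. (\<integral>p. Q k p \<partial>lborel) \<partial>lborel)"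
    by simp
  also have "(\<integral>k. (\<integral>p. Q k p \<partial>lborel) \<partial>lborel) = (\<integral>p. (\<integral>k. Q k p \<partial>lborel) \<partial>lborel)"
    using lborel_pair.Fubini_integral[OF Qint] by simp
  also have "\<dots> = (\<integral>p. (a (fst p) * cnj (b (snd p))) *
      complex_of_real (pi / \<epsilon> * exp (- ((norm (fst p - snd p))^2) / (4 * \<epsilon>))) \<partial>lborel)"
    unfolding inner_k ..
  also have "\<dots> = complex_of_real (pi / \<epsilon>) * (\<integral>p. a (fst p) * cnj (b (snd p)) * complex_of_real (exp (- ((norm (fst p - snd p))^2) / (4 * \<epsilon>))) \<partial>lborel)"
    by (simp add: integral_mult_right_zero[symmetric] mult_ac del: integral_mult_right_zero)
  finally show ?thesis using e by (simp add: power2_eq_square field_simps)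
qed

lemma reg2:
  fixes a b :: "real \<times> real \<Rightarrow> complex" and g :: "real \<times> real \<Rightarrow> real"
  assumes a: "integrable lborel a" and b: "integrable lborel b"
    and gm[measurable]: "g \<in> borel_measurable borel" and g1: "\<And>w. \<bar>g w\<bar> \<le> 1"
  shows "(\<integral>p. a (fst p) * cnj (b (snd p)) * complex_of_real (g (fst p - snd p)) \<partial>lborel) =
     (\<integral>w. complex_of_real (g w) * (\<integral>y. a (y + w) * cnj (b y) \<partial>lborel) \<partial>lborel)"
proof -
  have am[measurable]: "a \<in> borel_measurable borel" "b \<in> borel_measurable borel" using a b by auto
  define F where "F x y = a x * cnj (b y) * complex_of_real (g (x - y))" for x y :: "real \<times> real"
  have Fm: "(\<lambda>(x, y). F x y) \<in> borel_measurable (lborel \<Otimes>\<^sub>M lborel)"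
    unfolding F_def by measurable
  have iab: "integrable lborel (\<lambda>p::(real\<times>real)\<times>(real\<times>real). norm (a (fst p)) * norm (b (snd p)))"
    using a b by (intro integrable_mult_lborel(1)) auto
  have Fint: "integrable (lborel \<Otimes>\<^sub>M lborel) (\<lambda>(x, y). F x y)"
  proof (rule Bochner_Integration.integrable_bound[OF _ Fm])
    show "integrable (lborel \<Otimes>\<^sub>M lborel) (\<lambda>p::(real\<times>real)\<times>(real\<times>real). norm (a (fst p)) * norm (b (snd p)))"
      unfolding lborel_prod using iab .
    show "AE x in lborel \<Otimes>\<^sub>M lborel. norm (case x of (x, y) \<Rightarrow> F x y) \<le> norm (norm (a (fst x)) * norm (b (snd x)))"
    proof (intro AE_I2)
      fix p :: "(real\<times>real)\<times>(real\<times>real)"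
      have "norm (F (fst p) (snd p)) \<le> norm (a (fst p)) * norm (b (snd p)) * 1"
        unfolding F_def norm_mult complex_mod_cnj norm_of_real using g1[of "fst p - snd p"]
        by (intro mult_left_mono) auto
      then show "norm (case p of (x, y) \<Rightarrow> F x y) \<le> norm (norm (a (fst p)) * norm (b (snd p)))"
        by (cases p) simp
    qed
  qed
  define H where "H y w = a (w + y) * cnj (b y) * complex_of_real (g w)" for y w :: "real \<times> real"
  have Hm: "(\<lambda>(y, w). H y w) \<in> borel_measurable (lborel \<Otimes>\<^sub>M lborel)"
    unfolding H_def by measurable
  have Hint: "integrable (lborel \<Otimes>\<^sub>M lborel) (\<lambda>(y, w). H y w)"
  proof (rule integrableI_bounded[OF Hm])
    define NA where "NA = (\<integral>\<^sup>+x. ennreal (norm (a x)) \<partial>lborel)"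
    define NB where "NB = (\<integral>\<^sup>+x. ennreal (norm (b x)) \<partial>lborel)"
    have NA: "NA < \<infinity>" using a unfolding NA_def integrable_iff_bounded by auto
    have NB: "NB < \<infinity>" using b unfolding NB_def integrable_iff_bounded by auto
    have "(\<integral>\<^sup>+p. ennreal (norm (case p of (y, w) \<Rightarrow> H y w)) \<partial>(lborel \<Otimes>\<^sub>M lborel)) =
        (\<integral>\<^sup>+y. (\<integral>\<^sup>+w. ennreal (norm (H y w)) \<partial>lborel) \<partial>lborel)"
    proof -
      have Hn: "(\<lambda>p. ennreal (norm (case p of (y, w) \<Rightarrow> H y w))) \<in> borel_measurable (lborel \<Otimes>\<^sub>M lborel)"
        using Hm by measurable
      show ?thesis using lborel.nn_integral_fst[OF Hn, symmetric] by simp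
    qed
    also have "\<dots> \<le> (\<integral>\<^sup>+y. ennreal (norm (b y)) * NA \<partial>lborel)"
    proof (intro nn_integral_mono)
      fix y :: "real \<times> real"
      have "(\<integral>\<^sup>+w. ennreal (norm (H y w)) \<partial>lborel) \<le> (\<integral>\<^sup>+w. ennreal (norm (b y)) * ennreal (norm (a (w + y))) \<partial>lborel)"
      proof (intro nn_integral_mono)
        fix w :: "real \<times> real"
        have "norm (H y w) \<le> norm (b y) * norm (a (w + y)) * 1"
          unfolding H_def norm_mult complex_mod_cnj norm_of_real using g1[of w]
          by (simp add: mult_ac mult_left_le_one_le)
        then show "ennreal (norm (H y w)) \<le> ennreal (norm (b y)) * ennreal (norm (a (w + y)))"
          by (simp add: ennreal_mult[symmetric])
      qed
      also have "\<dots> = ennreal (norm (b y)) * (\<integral>\<^sup>+w. ennreal (norm (a (w + y))) \<partial>lborel)"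
        by (rule nn_integral_cmult) measurable
      also have "(\<integral>\<^sup>+w. ennreal (norm (a (w + y))) \<partial>lborel) = NA"
        unfolding NA_def by (rule nn_integral_translate[where f="\<lambda>x. ennreal (norm (a x))"]) measurable
      finally show "(\<integral>\<^sup>+w. ennreal (norm (H y w)) \<partial>lborel) \<le> ennreal (norm (b y)) * NA" .
    qed
    also have "\<dots> = NB * NA" unfolding NB_def by (rule nn_integral_multc) measurable
    also have "\<dots> < \<infinity>" using NA NB by (simp add: ennreal_mult_less_top)
    finally show "(\<integral>\<^sup>+p. ennreal (norm (case p of (y, w) \<Rightarrow> H y w)) \<partial>(lborel \<Otimes>\<^sub>M lborel)) < \<infinity>" .
  qed
  have "(\<integral>p. a (fst p) * cnj (b (snd p)) * complex_of_real (g (fst p - snd p)) \<partial>lborel) =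
      (\<integral>p. (case p of (x, y) \<Rightarrow> F x y) \<partial>(lborel \<Otimes>\<^sub>M lborel))"
    unfolding lborel_prod F_def by (simp add: case_prod_beta)
  also have "\<dots> = (\<integral>y. (\<integral>x. F x y \<partial>lborel) \<partial>lborel)"
    by (rule lborel_pair.integral_snd[OF Fint, symmetric])
  also have "\<dots> = (\<integral>y. (\<integral>w. H y w \<partial>lborel) \<partial>lborel)"
  proof (rule Bochner_Integration.integral_cong[OF refl])
    fix y :: "real \<times> real" assume "y \<in> space lborel"
    show "(\<integral>x. F x y \<partial>lborel) = (\<integral>w. H y w \<partial>lborel)"
      using integral_translate[where f="\<lambda>x. F x y" and w=y] unfolding F_def H_def by simp
  qed
  also have "\<dots> = (\<integral>w. (\<integral>y. H y w \<partial>lborel) \<partial>lborel)"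
    by (rule lborel_pair.Fubini_integral[OF Hint, symmetric])
  also have "\<dots> = (\<integral>w. complex_of_real (g w) * (\<integral>y. a (y + w) * cnj (b y) \<partial>lborel) \<partial>lborel)"
  proof (rule Bochner_Integration.integral_cong[OF refl])
    fix w :: "real \<times> real" assume "w \<in> space lborel"
    have "(\<integral>y. H y w \<partial>lborel) = (\<integral>y. complex_of_real (g w) * (a (y + w) * cnj (b y)) \<partial>lborel)"
      unfolding H_def by (simp add: mult_ac add.commute)
    then show "(\<integral>y. H y w \<partial>lborel) = complex_of_real (g w) * (\<integral>y. a (y + w) * cnj (b y) \<partial>lborel)"
      by simp
  qed
  finally show ?thesis .
qed

definition hfun :: "(real \<times> real \<Rightarrow> complex) \<Rightarrow> (real \<times> real \<Rightarrow> complex) \<Rightarrow> real \<times> real \<Rightarrow> complex" where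
  "hfun a b w = (\<integral>y. a (y + w) * cnj (b y) \<partial>lborel)"

lemma L2_translate:
  assumes "L2 a" shows "L2 (\<lambda>y. a (y + w))"
proof -
  have [measurable]: "a \<in> borel_measurable borel" using assms unfolding L2_def by simp
  have "integrable lborel (\<lambda>y. (cmod (a (y + w)))^2)"
    using assms unfolding L2_def by (simp add: integrable_translate_iff[where f="\<lambda>y. (cmod (a y))^2"])
  then show ?thesis unfolding L2_def by simp
qed

lemma L2_cnj: assumes "L2 b" shows "L2 (\<lambda>y. cnj (b y))"
  using assms unfolding L2_def by (auto intro: meas_cnj)

lemma L2_integrable_prod:
  assumes "L2 a" "L2 b" shows "integrable lborel (\<lambda>x. a x * b x)"
  using assms unfolding L2_def by (intro L2_mult_integrable) auto

lemma norm_mult_le_sq: "norm (x::complex) * norm y \<le> ((norm x)^2 + (norm y)^2) / 2"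
  using sum_squares_bound[of "norm x" "norm y"] by simp

lemma hfun_bound:
  assumes a: "L2 a" and b: "L2 b"
  shows "norm (hfun a b w) \<le> ((\<integral>x. (cmod (a x))^2 \<partial>lborel) + (\<integral>x. (cmod (b x))^2 \<partial>lborel)) / 2"
proof -
  have [measurable]: "a \<in> borel_measurable borel" "b \<in> borel_measurable borel" using a b unfolding L2_def by auto
  have ia: "integrable lborel (\<lambda>x. (cmod (a x))^2)" "integrable lborel (\<lambda>x. (cmod (b x))^2)"
    using a b unfolding L2_def by auto
  have iaw: "integrable lborel (\<lambda>y. (cmod (a (y + w)))^2)"
    using L2_translate[OF a] unfolding L2_def by auto
  have "norm (hfun a b w) \<le> (\<integral>y. norm (a (y + w) * cnj (b y)) \<partial>lborel)"
    unfolding hfun_def by (rule integral_norm_bound)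
  also have "\<dots> \<le> (\<integral>y. ((cmod (a (y + w)))^2 + (cmod (b y))^2) / 2 \<partial>lborel)"
  proof (rule integral_mono)
    show "integrable lborel (\<lambda>y. norm (a (y + w) * cnj (b y)))"
      using L2_integrable_prod[OF L2_translate[OF a] L2_cnj[OF b]] by auto
    show "integrable lborel (\<lambda>y. ((cmod (a (y + w)))^2 + (cmod (b y))^2) / 2)"
      using iaw ia by auto
    fix y show "norm (a (y + w) * cnj (b y)) \<le> ((cmod (a (y + w)))^2 + (cmod (b y))^2) / 2"
      using norm_mult_le_sq[of "a (y + w)" "b y"] by (simp add: norm_mult)
  qed
  also have "\<dots> = ((\<integral>y. (cmod (a (y + w)))^2 \<partial>lborel) + (\<integral>y. (cmod (b y))^2 \<partial>lborel)) / 2"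
    using iaw ia by simp
  also have "(\<integral>y. (cmod (a (y + w)))^2 \<partial>lborel) = (\<integral>y. (cmod (a y))^2 \<partial>lborel)"
    by (rule integral_translate[where f="\<lambda>y. (cmod (a y))^2"])
  finally show ?thesis .
qed

lemma hfun_measurable[measurable]:
  assumes [measurable]: "a \<in> borel_measurable borel" "b \<in> borel_measurable borel"
  shows "hfun a b \<in> borel_measurable borel"
proof -
  have "(\<lambda>(w, y). a (y + w) * cnj (b y)) \<in> borel_measurable (lborel \<Otimes>\<^sub>M lborel)"
    by measurable
  then have "(\<lambda>w. \<integral>y. a (y + w) * cnj (b y) \<partial>lborel) \<in> borel_measurable lborel"
    by (rule lborel.borel_measurable_lebesgue_integral)
  then show ?thesis unfolding hfun_def[abs_def] by simp
qed

lemma amgm_t: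
  fixes D B t :: real
  assumes t: "t > 0"
  shows "D * B \<le> t / 2 * D^2 + B^2 / (2 * t)"
proof -
  have "0 \<le> (t * D - B)^2" by simp
  then have "2 * t * (D * B) \<le> t^2 * D^2 + B^2" by (simp add: power2_eq_square algebra_simps)
  then have "D * B \<le> (t^2 * D^2 + B^2) / (2 * t)" using t by (simp add: field_simps)
  also have "\<dots> = t / 2 * D^2 + B^2 / (2 * t)" using t by (simp add: field_simps power2_eq_square)
  finally show ?thesis .
qed

lemma trunc_tail:
  assumes b: "L2 b"
  shows "(\<lambda>n::nat. \<integral>y. (if norm (b y) \<le> real n then 0 else (cmod (b y))^2) \<partial>lborel) \<longlonglongrightarrow> 0"
proof -
  have [measurable]: "b \<in> borel_measurable borel" using b unfolding L2_def by auto
  have ib: "integrable lborel (\<lambda>x. (cmod (b x))^2)" using b unfolding L2_def by auto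
  have "(\<lambda>n::nat. \<integral>y. (if norm (b y) \<le> real n then 0 else (cmod (b y))^2) \<partial>lborel) \<longlonglongrightarrow> (\<integral>y. 0 \<partial>(lborel::(real\<times>real) measure))"
  proof (rule Bochner_Integration.integral_dominated_convergence[where w="\<lambda>y. (cmod (b y))^2"])
    show "AE x in lborel. (\<lambda>n::nat. if norm (b x) \<le> real n then 0 else (cmod (b x))^2) \<longlonglongrightarrow> 0"
    proof (intro AE_I2)
      fix x
      obtain N :: nat where "norm (b x) \<le> real N" using real_arch_simple by blast
      then have "eventually (\<lambda>n::nat. (if norm (b x) \<le> real n then 0 else (cmod (b x))^2) = 0) sequentially"
        unfolding eventually_sequentially by (intro exI[of _ N]) auto
      then show "(\<lambda>n::nat. if norm (b x) \<le> real n then 0 else (cmod (b x))^2) \<longlonglongrightarrow> 0"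
        by (rule tendsto_eventually)
    qed
  qed (use ib in auto)
  then show ?thesis by simp
qed

lemma hfun_cont:
  assumes ai: "integrable lborel a" and a: "L2 a" and b: "L2 b"
  shows "isCont (hfun a b) 0"
proof -
  have [measurable]: "a \<in> borel_measurable borel" "b \<in> borel_measurable borel" using a b unfolding L2_def by auto
  have ia: "integrable lborel (\<lambda>x. (cmod (a x))^2)" and ib: "integrable lborel (\<lambda>x. (cmod (b x))^2)"
    using a b unfolding L2_def by auto
  define A where "A = (\<integral>x. (cmod (a x))^2 \<partial>lborel)"
  have A0: "A \<ge> 0" unfolding A_def by simp
  have main: "\<exists>d>0. \<forall>w. norm w < d \<longrightarrow> norm (hfun a b w - hfun a b 0) < e" if e: "e > 0" for e
  proof -
    define t where "t = e / (6 * A + 6)"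
    have t: "t > 0" unfolding t_def using e A0 by simp
    have tA: "t / 2 * (4 * A) < e / 3"
    proof -
      have "t / 2 * (4 * A) = 2 * A * e / (6 * A + 6)" unfolding t_def using A0 by (simp add: field_simps)
      also have "\<dots> < e / 3" using e A0 by (simp add: field_simps)
      finally show ?thesis .
    qed
    define R where "R n y = (if norm (b y) \<le> real n then 0 else (cmod (b y))^2)" for n :: nat and y
    have "eventually (\<lambda>n. (\<integral>y. R n y \<partial>lborel) < 2 * t * (e / 3)) sequentially"
      using trunc_tail[OF b] t e unfolding R_def[abs_def] by (intro order_tendstoD(2)) auto
    then obtain n where n: "(\<integral>y. R n y \<partial>lborel) < 2 * t * (e / 3)"
      by (auto simp: eventually_sequentially)
    have Rint: "integrable lborel (R n)"
    proof (rule Bochner_Integration.integrable_bound[OF ib])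
      show "R n \<in> borel_measurable lborel" unfolding R_def[abs_def] by measurable
    qed (auto simp: R_def)
    have e3: "e / (3 * (real n + 1)) > 0" using e by simp
    obtain d where d: "d > 0" "\<And>w. norm w < d \<Longrightarrow> (\<integral>x. norm (a (x + w) - a x) \<partial>lborel) < e / (3 * (real n + 1))"
      using transl_cont[OF ai] e3 unfolding tcont_def by blast
    show ?thesis
    proof (intro exI[of _ d] conjI allI impI d(1))
      fix w :: "real \<times> real" assume w: "norm w < d"
      define D where "D y = norm (a (y + w) - a y)" for y
      have Dint: "integrable lborel D" unfolding D_def by (rule integrable_transl_diff[OF ai])
      have iaw: "integrable lborel (\<lambda>y. (cmod (a (y + w)))^2)"
        using L2_translate[OF a] unfolding L2_def by auto
      have D2: "(D y)^2 \<le> 2 * (cmod (a (y + w)))^2 + 2 * (cmod (a y))^2" for y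
      proof -
        have "D y \<le> cmod (a (y + w)) + cmod (a y)" unfolding D_def by (rule norm_triangle_ineq4)
        then have "(D y)^2 \<le> (cmod (a (y + w)) + cmod (a y))^2"
          by (intro power_mono) (auto simp: D_def)
        also have "\<dots> \<le> 2 * (cmod (a (y + w)))^2 + 2 * (cmod (a y))^2"
          using sum_squares_bound[of "cmod (a (y + w))" "cmod (a y)"] by (simp add: power2_sum)
        finally show ?thesis .
      qed
      have D2int: "integrable lborel (\<lambda>y. (D y)^2)"
        by (rule Bochner_Integration.integrable_bound[where f="\<lambda>y. 2 * (cmod (a (y + w)))^2 + 2 * (cmod (a y))^2"])
           (use iaw ia D2 in \<open>auto simp: D_def\<close>)
      have D2I: "(\<integral>y. (D y)^2 \<partial>lborel) \<le> 4 * A"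
      proof -
        have "(\<integral>y. (D y)^2 \<partial>lborel) \<le> (\<integral>y. 2 * (cmod (a (y + w)))^2 + 2 * (cmod (a y))^2 \<partial>lborel)"
          using D2int iaw ia D2 by (intro integral_mono) auto
        also have "\<dots> = 2 * (\<integral>y. (cmod (a (y + w)))^2 \<partial>lborel) + 2 * A"
          using iaw ia unfolding A_def by simp
        also have "(\<integral>y. (cmod (a (y + w)))^2 \<partial>lborel) = A"
          unfolding A_def by (rule integral_translate[where f="\<lambda>y. (cmod (a y))^2"])
        finally show ?thesis by simp
      qed
      have pw: "D y * norm (b y) \<le> real n * D y + t / 2 * (D y)^2 + 1 / (2 * t) * R n y" for y
      proof (cases "norm (b y) \<le> real n")
        case True
        then have "D y * norm (b y) \<le> D y * real n" by (intro mult_left_mono) (auto simp: D_def)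
        moreover have "0 \<le> t / 2 * (D y)^2" using t by simp
        ultimately show ?thesis using True by (simp add: R_def mult.commute)
      next
        case False
        have "D y * norm (b y) \<le> t / 2 * (D y)^2 + (norm (b y))^2 / (2 * t)" by (rule amgm_t[OF t])
        moreover have "0 \<le> real n * D y" by (simp add: D_def)
        ultimately show ?thesis using False by (simp add: R_def)
      qed
      have hdiff: "hfun a b w - hfun a b 0 = (\<integral>y. (a (y + w) - a y) * cnj (b y) \<partial>lborel)"
      proof -
        have i1: "integrable lborel (\<lambda>y. a (y + w) * cnj (b y))"
          by (rule L2_integrable_prod[OF L2_translate[OF a] L2_cnj[OF b]])
        have i2: "integrable lborel (\<lambda>y. a y * cnj (b y))"
          by (rule L2_integrable_prod[OF a L2_cnj[OF b]])
        show ?thesis unfolding hfun_def using i1 i2 by (simp add: algebra_simps)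
      qed
      have DBint: "integrable lborel (\<lambda>y. D y * norm (b y))"
      proof (rule Bochner_Integration.integrable_bound[where f="\<lambda>y. ((D y)^2 + (cmod (b y))^2) / 2"])
        show "integrable lborel (\<lambda>y. ((D y)^2 + (cmod (b y))^2) / 2)" using D2int ib by auto
        show "(\<lambda>y. D y * norm (b y)) \<in> borel_measurable lborel" unfolding D_def by measurable
        show "AE y in lborel. norm (D y * norm (b y)) \<le> norm (((D y)^2 + (cmod (b y))^2) / 2)"
        proof (intro AE_I2)
          fix y
          have "2 * D y * norm (b y) \<le> (D y)^2 + (norm (b y))^2" by (rule sum_squares_bound)
          then show "norm (D y * norm (b y)) \<le> norm (((D y)^2 + (cmod (b y))^2) / 2)"
            by (simp add: D_def abs_mult)
        qed
      qed
      have "norm (hfun a b w - hfun a b 0) \<le> (\<integral>y. norm ((a (y + w) - a y) * cnj (b y)) \<partial>lborel)"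
        unfolding hdiff by (rule integral_norm_bound)
      also have "\<dots> = (\<integral>y. D y * norm (b y) \<partial>lborel)"
        by (simp add: D_def norm_mult)
      also have "\<dots> \<le> (\<integral>y. real n * D y + t / 2 * (D y)^2 + 1 / (2 * t) * R n y \<partial>lborel)"
        using DBint Dint D2int Rint pw by (intro integral_mono) auto
      also have "\<dots> = real n * (\<integral>y. D y \<partial>lborel) + t / 2 * (\<integral>y. (D y)^2 \<partial>lborel) + 1 / (2 * t) * (\<integral>y. R n y \<partial>lborel)"
        using Dint D2int Rint by simp
      also have "\<dots> < e / 3 + e / 3 + e / 3"
      proof -
        have "real n * (\<integral>y. D y \<partial>lborel) \<le> real n * (e / (3 * (real n + 1)))"
          using d(2)[OF w] unfolding D_def by (intro mult_left_mono) auto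
        also have "\<dots> < e / 3" using e by (simp add: field_simps)
        finally have 1: "real n * (\<integral>y. D y \<partial>lborel) < e / 3" .
        have 2: "t / 2 * (\<integral>y. (D y)^2 \<partial>lborel) < e / 3"
        proof -
          have "t / 2 * (\<integral>y. (D y)^2 \<partial>lborel) \<le> t / 2 * (4 * A)"
            using D2I t by (intro mult_left_mono) auto
          then show ?thesis using tA by linarith
        qed
        have 3: "1 / (2 * t) * (\<integral>y. R n y \<partial>lborel) < e / 3"
          using n t by (simp add: field_simps)
        show ?thesis using 1 2 3 by linarith
      qed
      finally show "norm (hfun a b w - hfun a b 0) < e" by simp
    qed
  qed
  show ?thesis unfolding isCont_def LIM_eq
  proof (intro allI impI)
    fix r :: real assume "r > 0"
    from main[OF this] obtain d where "d > 0" "\<forall>w. norm w < d \<longrightarrow> norm (hfun a b w - hfun a b 0) < r" by blast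
    then show "\<exists>s>0. \<forall>x. x \<noteq> 0 \<and> norm (x - 0) < s \<longrightarrow> norm (hfun a b x - hfun a b 0) < r" by auto
  qed
qed

lemma approx_lim:
  fixes h :: "real \<times> real \<Rightarrow> complex" and c :: "nat \<Rightarrow> real"
  assumes hm[measurable]: "h \<in> borel_measurable borel" and hb: "\<And>w. norm (h w) \<le> M"
    and hc: "isCont h 0" and c: "c \<longlonglongrightarrow> 0"
  shows "(\<lambda>n. \<integral>v. complex_of_real (exp (- ((norm v)^2)) / pi) * h (c n *\<^sub>R v) \<partial>lborel) \<longlonglongrightarrow> h 0"
proof -
  have gi: "integrable lborel (\<lambda>v::real\<times>real. exp (-1 * (norm v)^2))" and gI: "(\<integral>v. exp (-1 * (norm v)^2) \<partial>(lborel::(real\<times>real) measure)) = pi"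
    using gauss_real[of 1] by auto
  have gi': "integrable lborel (\<lambda>v::real\<times>real. exp (- ((norm v)^2)) / pi)" using gi by simp
  have "(\<lambda>n. \<integral>v. complex_of_real (exp (- ((norm v)^2)) / pi) * h (c n *\<^sub>R v) \<partial>lborel) \<longlonglongrightarrow>
      (\<integral>v. complex_of_real (exp (- ((norm (v::real\<times>real))^2)) / pi) * h 0 \<partial>lborel)"
  proof (rule Bochner_Integration.integral_dominated_convergence[where w="\<lambda>v. exp (- ((norm v)^2)) / pi * M"])
    show "integrable lborel (\<lambda>v::real\<times>real. exp (- ((norm v)^2)) / pi * M)"
      using integrable_mult_left[OF gi', of M] by (simp only: mult.commute)
    show "AE x in lborel. (\<lambda>n. complex_of_real (exp (- ((norm x)^2)) / pi) * h (c n *\<^sub>R x)) \<longlonglongrightarrow>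
        complex_of_real (exp (- ((norm x)^2)) / pi) * h 0"
    proof (intro AE_I2 tendsto_mult tendsto_const)
      fix x :: "real \<times> real"
      have "(\<lambda>n. c n *\<^sub>R x) \<longlonglongrightarrow> 0 *\<^sub>R x" by (intro tendsto_scaleR c tendsto_const)
      then show "(\<lambda>n. h (c n *\<^sub>R x)) \<longlonglongrightarrow> h 0" using isCont_tendsto_compose[OF hc] by simp
    qed
    show "AE x in lborel. norm (complex_of_real (exp (- ((norm x)^2)) / pi) * h (c n *\<^sub>R x)) \<le> exp (- ((norm x)^2)) / pi * M" for n
    proof (intro AE_I2)
      fix x :: "real \<times> real"
      have "norm (complex_of_real (exp (- ((norm x)^2)) / pi) * h (c n *\<^sub>R x)) = exp (- ((norm x)^2)) / pi * norm (h (c n *\<^sub>R x))"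
        by (simp only: norm_mult norm_of_real abs_of_pos[OF divide_pos_pos[OF exp_gt_zero pi_gt_zero]])
      also have "\<dots> \<le> exp (- ((norm x)^2)) / pi * M" by (intro mult_left_mono hb) auto
      finally show "norm (complex_of_real (exp (- ((norm x)^2)) / pi) * h (c n *\<^sub>R x)) \<le> exp (- ((norm x)^2)) / pi * M" .
    qed
  qed measurable
  also have "(\<integral>v. complex_of_real (exp (- ((norm (v::real\<times>real))^2)) / pi) * h 0 \<partial>lborel) = h 0"
  proof -
    have "(\<integral>v. complex_of_real (exp (- ((norm (v::real\<times>real))^2)) / pi) * h 0 \<partial>lborel) =
        complex_of_real (\<integral>v. exp (- ((norm v)^2)) / pi \<partial>(lborel::(real\<times>real) measure)) * h 0"
      by simp
    also have "(\<integral>v. exp (- ((norm v)^2)) / pi \<partial>(lborel::(real\<times>real) measure)) = 1"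
      using gI by simp
    finally show ?thesis by simp
  qed
  finally show ?thesis .
qed

lemma reg_eq:
  fixes a b :: "real \<times> real \<Rightarrow> complex"
  assumes ai: "integrable lborel a" and bi: "integrable lborel b" and e: "\<epsilon> > 0"
  shows "(\<integral>k. ft a k * cnj (ft b k) * complex_of_real (exp (-\<epsilon> * (norm k)^2)) \<partial>lborel) =
    (\<integral>v. complex_of_real (exp (- ((norm v)^2)) / pi) * hfun a b ((2 * sqrt \<epsilon>) *\<^sub>R v) \<partial>lborel)"
proof -
  define c where "c = 2 * sqrt \<epsilon>"
  have c: "c > 0" "c^2 = 4 * \<epsilon>" using e by (auto simp: c_def power_mult_distrib)
  define g where "g w = exp (- ((norm w)^2) / (4 * \<epsilon>))" for w :: "real \<times> real"
  have gm: "g \<in> borel_measurable borel" unfolding g_def by measurable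
  have g1: "\<bar>g w\<bar> \<le> 1" for w unfolding g_def using e by simp
  have gc: "g (c *\<^sub>R v) = exp (- ((norm v)^2))" for v
    unfolding g_def using c e by (simp add: power_mult_distrib)
  have "(\<integral>k. ft a k * cnj (ft b k) * complex_of_real (exp (-\<epsilon> * (norm k)^2)) \<partial>lborel) =
      complex_of_real (1 / (4 * pi * \<epsilon>)) * (\<integral>w. complex_of_real (g w) * hfun a b w \<partial>lborel)"
    unfolding reg1[OF ai bi e] using reg2[OF ai bi gm g1] unfolding g_def hfun_def by simp
  also have "(\<integral>w. complex_of_real (g w) * hfun a b w \<partial>lborel) =
      c^2 *\<^sub>R (\<integral>v. complex_of_real (g (c *\<^sub>R v)) * hfun a b (c *\<^sub>R v) \<partial>lborel)"
    by (rule integral_scale_R2[OF c(1)])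
  also have "complex_of_real (1 / (4 * pi * \<epsilon>)) * (c^2 *\<^sub>R (\<integral>v. complex_of_real (g (c *\<^sub>R v)) * hfun a b (c *\<^sub>R v) \<partial>lborel))
      = (\<integral>v. complex_of_real (1 / pi) * (complex_of_real (g (c *\<^sub>R v)) * hfun a b (c *\<^sub>R v)) \<partial>lborel)"
    using c e by (simp add: scaleR_conv_of_real field_simps)
  also have "\<dots> = (\<integral>v. complex_of_real (exp (- ((norm v)^2)) / pi) * hfun a b (c *\<^sub>R v) \<partial>lborel)"
    unfolding gc by (simp add: field_simps)
  finally show ?thesis unfolding c_def .
qed

lemma reg_lim:
  fixes a b :: "real \<times> real \<Rightarrow> complex"
  assumes ai: "integrable lborel a" and a: "L2 a" and bi: "integrable lborel b" and b: "L2 b"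
  shows "(\<lambda>n. \<integral>k. ft a k * cnj (ft b k) * complex_of_real (exp (-(1 / (real n + 1)) * (norm k)^2)) \<partial>lborel)
     \<longlonglongrightarrow> (\<integral>x. a x * cnj (b x) \<partial>lborel)"
proof -
  have [measurable]: "a \<in> borel_measurable borel" "b \<in> borel_measurable borel" using a b unfolding L2_def by auto
  define c where "c n = 2 * sqrt (1 / (real n + 1))" for n :: nat
  have c0: "c \<longlonglongrightarrow> 0"
  proof -
    have "(\<lambda>n. inverse (real (Suc n))) \<longlonglongrightarrow> 0" by (rule LIMSEQ_inverse_real_of_nat)
    then have "(\<lambda>n. 1 / (real n + 1)) \<longlonglongrightarrow> 0" by (simp add: inverse_eq_divide add.commute)
    then have "(\<lambda>n. 2 * sqrt (1 / (real n + 1))) \<longlonglongrightarrow> 2 * sqrt 0"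
      by (intro tendsto_mult tendsto_const tendsto_real_sqrt)
    then show ?thesis unfolding c_def by simp
  qed
  have eq: "(\<integral>k. ft a k * cnj (ft b k) * complex_of_real (exp (-(1 / (real n + 1)) * (norm k)^2)) \<partial>lborel) =
    (\<integral>v. complex_of_real (exp (- ((norm v)^2)) / pi) * hfun a b (c n *\<^sub>R v) \<partial>lborel)" for n
    unfolding c_def by (rule reg_eq[OF ai bi]) simp
  have "(\<lambda>n. \<integral>v. complex_of_real (exp (- ((norm v)^2)) / pi) * hfun a b (c n *\<^sub>R v) \<partial>lborel) \<longlonglongrightarrow> hfun a b 0"
    by (rule approx_lim[OF _ hfun_bound[OF a b] hfun_cont[OF ai a b] c0]) measurable
  moreover have "hfun a b 0 = (\<integral>x. a x * cnj (b x) \<partial>lborel)" unfolding hfun_def by simp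
  ultimately show ?thesis unfolding eq by simp
qed

lemma ft_bound:
  assumes ai: "integrable lborel a"
  shows "norm (ft a k) \<le> (\<integral>x. norm (a x) \<partial>lborel) / (2 * pi)"
proof -
  have [measurable]: "a \<in> borel_measurable lborel" using ai by auto
  have "norm (LINT x|lborel. a x * cis (- dotp k x)) \<le> (\<integral>x. norm (a x * cis (- dotp k x)) \<partial>lborel)"
    by (rule integral_norm_bound)
  also have "\<dots> = (\<integral>x. norm (a x) \<partial>lborel)" by (simp add: norm_mult)
  finally have *: "norm (LINT x|lborel. a x * cis (- dotp k x)) \<le> (\<integral>x. norm (a x) \<partial>lborel)" .
  have "norm (ft a k) = (1 / (2 * pi)) * norm (LINT x|lborel. a x * cis (- dotp k x))"
    unfolding ft_dotp norm_mult norm_of_real by simp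
  also have "\<dots> \<le> (1 / (2 * pi)) * (\<integral>x. norm (a x) \<partial>lborel)"
    using * by (intro mult_left_mono) auto
  finally show ?thesis by simp
qed

lemma E_mono: "mono (\<lambda>n::nat. exp (-(1 / (real n + 1)) * (norm (k::real\<times>real))^2))"
proof (rule monoI)
  fix m n :: nat assume "m \<le> n"
  then have "1 / (real n + 1) \<le> 1 / (real m + 1)" by (simp add: frac_le)
  then have "-(1 / (real m + 1)) * (norm k)^2 \<le> -(1 / (real n + 1)) * (norm k)^2"
    by (intro mult_right_mono) auto
  then show "exp (-(1 / (real m + 1)) * (norm k)^2) \<le> exp (-(1 / (real n + 1)) * (norm k)^2)" by simp
qed

lemma E_lim: "(\<lambda>n::nat. exp (-(1 / (real n + 1)) * (norm (k::real\<times>real))^2)) \<longlonglongrightarrow> 1"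
proof -
  have "(\<lambda>n. inverse (real (Suc n))) \<longlonglongrightarrow> 0" by (rule LIMSEQ_inverse_real_of_nat)
  then have "(\<lambda>n. 1 / (real n + 1)) \<longlonglongrightarrow> 0" by (simp add: inverse_eq_divide add.commute)
  then have "(\<lambda>n::nat. exp (-(1 / (real n + 1)) * (norm k)^2)) \<longlonglongrightarrow> exp (- 0 * (norm k)^2)"
    by (intro tendsto_intros)
  then show ?thesis by simp
qed

lemma E_le1: "exp (-(1 / (real n + 1)) * (norm (k::real\<times>real))^2) \<le> 1"
  by simp

lemma plancherel:
  assumes ai: "integrable lborel a" and a: "L2 a"
  shows "L2 (ft a)" and "(\<integral>k. (cmod (ft a k))^2 \<partial>lborel) = (\<integral>x. (cmod (a x))^2 \<partial>lborel)"
proof -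
  have am[measurable]: "a \<in> borel_measurable borel" using a unfolding L2_def by auto
  have fm[measurable]: "ft a \<in> borel_measurable borel" using ft_measurable[of a] by simp
  define E where "E n k = exp (-(1 / (real n + 1)) * (norm (k::real\<times>real))^2)" for n :: nat and k
  define f where "f n k = (cmod (ft a k))^2 * E n k" for n k
  define C where "C = ((\<integral>x. norm (a x) \<partial>lborel) / (2 * pi))^2"
  have fi: "integrable lborel (f n)" for n
  proof (rule Bochner_Integration.integrable_bound[where f="\<lambda>k. C * E n k"])
    show "integrable lborel (\<lambda>k. C * E n k)" unfolding E_def using gauss_real(1)[of "1 / (real n + 1)"] by simp
    show "f n \<in> borel_measurable lborel" unfolding f_def E_def by measurable
    show "AE k in lborel. norm (f n k) \<le> norm (C * E n k)"
    proof (intro AE_I2)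
      fix k
      have "(cmod (ft a k))^2 \<le> C" unfolding C_def using ft_bound[OF ai, of k] by (intro power_mono) auto
      then show "norm (f n k) \<le> norm (C * E n k)" unfolding f_def E_def
        by (simp add: abs_mult)
    qed
  qed
  have J: "(\<integral>k. ft a k * cnj (ft a k) * complex_of_real (E n k) \<partial>lborel) = complex_of_real (integral\<^sup>L lborel (f n))" for n
  proof -
    have "(\<integral>k. ft a k * cnj (ft a k) * complex_of_real (E n k) \<partial>lborel) = (\<integral>k. complex_of_real (f n k) \<partial>lborel)"
      unfolding f_def of_real_mult complex_norm_square ..
    then show ?thesis by simp
  qed
  have R: "(\<integral>x. a x * cnj (a x) \<partial>lborel) = complex_of_real (\<integral>x. (cmod (a x))^2 \<partial>lborel)"
  proof -
    have "(\<integral>x. a x * cnj (a x) \<partial>lborel) = (\<integral>x. complex_of_real ((cmod (a x))^2) \<partial>lborel)"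
      unfolding complex_norm_square ..
    then show ?thesis by (simp only: integral_complex_of_real)
  qed
  have "(\<lambda>n. complex_of_real (integral\<^sup>L lborel (f n))) \<longlonglongrightarrow> complex_of_real (\<integral>x. (cmod (a x))^2 \<partial>lborel)"
    using reg_lim[OF ai a ai a] unfolding J[unfolded E_def] R E_def .
  then have lim: "(\<lambda>n. integral\<^sup>L lborel (f n)) \<longlonglongrightarrow> (\<integral>x. (cmod (a x))^2 \<partial>lborel)"
    by (simp only: tendsto_of_real_iff)
  have mono: "AE k in lborel. mono (\<lambda>n. f n k)"
    unfolding f_def E_def by (intro AE_I2 monoI mult_left_mono E_mono[THEN monoD]) auto
  have plim: "AE k in lborel. (\<lambda>n. f n k) \<longlonglongrightarrow> (cmod (ft a k))^2"
  proof (intro AE_I2)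
    fix k :: "real \<times> real"
    have "(\<lambda>n. (cmod (ft a k))^2 * E n k) \<longlonglongrightarrow> (cmod (ft a k))^2 * 1"
      unfolding E_def by (intro tendsto_mult tendsto_const E_lim)
    then show "(\<lambda>n. f n k) \<longlonglongrightarrow> (cmod (ft a k))^2" unfolding f_def by simp
  qed
  have um: "(\<lambda>k. (cmod (ft a k))^2) \<in> borel_measurable lborel" by measurable
  have "integrable lborel (\<lambda>k. (cmod (ft a k))^2)"
    by (rule integrable_monotone_convergence[OF fi mono plim lim um])
  then show "L2 (ft a)" unfolding L2_def by simp
  show "(\<integral>k. (cmod (ft a k))^2 \<partial>lborel) = (\<integral>x. (cmod (a x))^2 \<partial>lborel)"
    by (rule integral_monotone_convergence[OF fi mono plim lim um])
qed

lemma parseval: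
  assumes ai: "integrable lborel a" and a: "L2 a" and bi: "integrable lborel b" and b: "L2 b"
  shows "integrable lborel (\<lambda>k. ft a k * cnj (ft b k))"
    and "(\<integral>k. ft a k * cnj (ft b k) \<partial>lborel) = (\<integral>x. a x * cnj (b x) \<partial>lborel)"
proof -
  have fa: "L2 (ft a)" and fb: "L2 (ft b)" using plancherel[OF ai a] plancherel[OF bi b] by auto
  show I: "integrable lborel (\<lambda>k. ft a k * cnj (ft b k))"
    by (rule L2_integrable_prod[OF fa L2_cnj[OF fb]])
  have [measurable]: "ft a \<in> borel_measurable borel" "ft b \<in> borel_measurable borel"
    using fa fb unfolding L2_def by auto
  have "(\<lambda>n. \<integral>k. ft a k * cnj (ft b k) * complex_of_real (exp (-(1 / (real n + 1)) * (norm k)^2)) \<partial>lborel)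
     \<longlonglongrightarrow> (\<integral>k. ft a k * cnj (ft b k) \<partial>lborel)"
  proof (rule Bochner_Integration.integral_dominated_convergence[where w="\<lambda>k. norm (ft a k * cnj (ft b k))"])
    show "integrable lborel (\<lambda>k. norm (ft a k * cnj (ft b k)))" using I by auto
    show "AE k in lborel. (\<lambda>n. ft a k * cnj (ft b k) * complex_of_real (exp (-(1 / (real n + 1)) * (norm k)^2)))
       \<longlonglongrightarrow> ft a k * cnj (ft b k)"
    proof (intro AE_I2)
      fix k :: "real \<times> real"
      have "(\<lambda>n. ft a k * cnj (ft b k) * complex_of_real (exp (-(1 / (real n + 1)) * (norm k)^2)))
        \<longlonglongrightarrow> ft a k * cnj (ft b k) * complex_of_real 1"
        by (intro tendsto_mult tendsto_const tendsto_of_real E_lim)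
      then show "(\<lambda>n. ft a k * cnj (ft b k) * complex_of_real (exp (-(1 / (real n + 1)) * (norm k)^2)))
        \<longlonglongrightarrow> ft a k * cnj (ft b k)" by simp
    qed
    show "AE k in lborel. norm (ft a k * cnj (ft b k) * complex_of_real (exp (-(1 / (real n + 1)) * (norm k)^2))) \<le> norm (ft a k * cnj (ft b k))" for n
    proof (intro AE_I2)
      fix k :: "real \<times> real"
      have "norm (ft a k * cnj (ft b k) * complex_of_real (exp (-(1 / (real n + 1)) * (norm k)^2)))
          = norm (ft a k * cnj (ft b k)) * exp (-(1 / (real n + 1)) * (norm k)^2)"
        by (simp only: norm_mult norm_of_real abs_of_pos[OF exp_gt_zero])
      also have "\<dots> \<le> norm (ft a k * cnj (ft b k)) * 1" by (intro mult_left_mono E_le1) auto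
      finally show "norm (ft a k * cnj (ft b k) * complex_of_real (exp (-(1 / (real n + 1)) * (norm k)^2))) \<le> norm (ft a k * cnj (ft b k))" by simp
    qed
  qed measurable
  then show "(\<integral>k. ft a k * cnj (ft b k) \<partial>lborel) = (\<integral>x. a x * cnj (b x) \<partial>lborel)"
    using reg_lim[OF ai a bi b] by (rule LIMSEQ_unique)
qed

lemma L2_reflect: assumes "L2 f" shows "L2 (\<lambda>k. f (- k))"
proof -
  have [measurable]: "f \<in> borel_measurable borel" using assms unfolding L2_def by auto
  have "integrable lborel (\<lambda>k. (cmod (f (- k)))^2)"
    using assms unfolding L2_def by (simp add: integrable_reflect_iff[where f="\<lambda>k. (cmod (f k))^2"])
  then show ?thesis unfolding L2_def by simp
qed

lemma ft_cnj_reflect: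
  "cnj (ft (\<lambda>k. cnj (\<psi> (- k))) x) = ft \<psi> x"
proof -
  have "cnj (LINT k|lborel. cnj (\<psi> (- k)) * cis (- dotp x k)) = (LINT k|lborel. cnj (cnj (\<psi> (- k)) * cis (- dotp x k)))"
    by (rule Bochner_Integration.integral_cnj[symmetric])
  also have "\<dots> = (LINT k|lborel. \<psi> (- k) * cis (- dotp x (- k)))"
    by (simp add: cis_cnj dotp_def)
  also have "\<dots> = (LINT k|lborel. \<psi> k * cis (- dotp x k))"
    by (rule integral_reflect[where f="\<lambda>k. \<psi> k * cis (- dotp x k)"])
  finally show ?thesis unfolding ft_dotp by simp
qed

lemma inversion:
  fixes \<Phi> \<psi> :: "real \<times> real \<Rightarrow> complex"
  assumes Pi: "integrable lborel \<Phi>" and P: "L2 \<Phi>" and psii: "integrable lborel \<psi>" and psi: "L2 \<psi>"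
  shows "(\<integral>k. \<Phi> k * \<psi> k \<partial>lborel) = (\<integral>x. ft (\<lambda>k. \<Phi> (- k)) x * ft \<psi> x \<partial>lborel)"
proof -
  have [measurable]: "\<Phi> \<in> borel_measurable borel" "\<psi> \<in> borel_measurable borel" using P psi unfolding L2_def by auto
  define a where "a k = \<Phi> (- k)" for k
  define b where "b k = cnj (\<psi> (- k))" for k
  have ai: "integrable lborel a" unfolding a_def using Pi by (simp add: integrable_reflect_iff[where f=\<Phi>])
  have bi: "integrable lborel b"
  proof -
    have "integrable lborel (\<lambda>k. \<psi> (- k))" using integrable_reflect_iff[where f=\<psi>] psii by simp
    then show ?thesis unfolding b_def by simp
  qed
  have a2: "L2 a" unfolding a_def by (rule L2_reflect[OF P])
  have b2: "L2 b" unfolding b_def by (rule L2_reflect[OF L2_cnj[OF psi]])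
  have "(\<integral>x. ft a x * cnj (ft b x) \<partial>lborel) = (\<integral>k. a k * cnj (b k) \<partial>lborel)"
    by (rule parseval(2)[OF ai a2 bi b2])
  moreover have "(\<integral>k. a k * cnj (b k) \<partial>lborel) = (\<integral>k. \<Phi> k * \<psi> k \<partial>lborel)"
    unfolding a_def b_def using integral_reflect[where f="\<lambda>k. \<Phi> k * \<psi> k"] by simp
  moreover have "cnj (ft b x) = ft \<psi> x" for x unfolding b_def by (rule ft_cnj_reflect)
  ultimately show ?thesis unfolding a_def by simp
qed

lemma ball_integrable: "integrable lborel (indicator (ball (0::real\<times>real) r) :: real\<times>real \<Rightarrow> real)"
  using emeasure_bounded_finite[of "ball (0::real\<times>real) r"] by (intro integrable_real_indicator) auto

lemma fourier_unique:
  assumes f1: "is_fourier_L2 u \<phi>1" and f2: "is_fourier_L2 u \<phi>2"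
  shows "AE k in lborel. \<phi>1 k = \<phi>2 k"
proof -
  have p1: "L2 \<phi>1" and p2: "L2 \<phi>2" using f1 f2 unfolding is_fourier_L2_def by auto
  have [measurable]: "\<phi>1 \<in> borel_measurable borel" "\<phi>2 \<in> borel_measurable borel" using p1 p2 unfolding L2_def by auto
  define d where "d k = \<phi>1 k - \<phi>2 k" for k
  have dm[measurable]: "d \<in> borel_measurable borel" unfolding d_def by measurable
  have d2: "L2 d"
  proof -
    have "integrable lborel (\<lambda>k. (cmod (\<phi>1 k - \<phi>2 k))^2)"
    proof (rule Bochner_Integration.integrable_bound[where f="\<lambda>k. 2 * (cmod (\<phi>1 k))^2 + 2 * (cmod (\<phi>2 k))^2"])
      show "integrable lborel (\<lambda>k. 2 * (cmod (\<phi>1 k))^2 + 2 * (cmod (\<phi>2 k))^2)"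
        using p1 p2 unfolding L2_def by auto
      show "AE k in lborel. norm ((cmod (\<phi>1 k - \<phi>2 k))^2) \<le> norm (2 * (cmod (\<phi>1 k))^2 + 2 * (cmod (\<phi>2 k))^2)"
      proof (intro AE_I2)
        fix k
        have "cmod (\<phi>1 k - \<phi>2 k) \<le> cmod (\<phi>1 k) + cmod (\<phi>2 k)" by (rule norm_triangle_ineq4)
        then have "(cmod (\<phi>1 k - \<phi>2 k))^2 \<le> (cmod (\<phi>1 k) + cmod (\<phi>2 k))^2" by (intro power_mono) auto
        also have "\<dots> \<le> 2 * (cmod (\<phi>1 k))^2 + 2 * (cmod (\<phi>2 k))^2"
          using sum_squares_bound[of "cmod (\<phi>1 k)" "cmod (\<phi>2 k)"] by (simp add: power2_sum)
        finally show "norm ((cmod (\<phi>1 k - \<phi>2 k))^2) \<le> norm (2 * (cmod (\<phi>1 k))^2 + 2 * (cmod (\<phi>2 k))^2)" by simp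
      qed
    qed measurable
    then show ?thesis unfolding L2_def d_def by simp
  qed
  have ball_zero: "AE k in lborel. k \<in> ball 0 (real n) \<longrightarrow> d k = 0" for n :: nat
  proof -
    define I :: "real \<times> real \<Rightarrow> real" where "I = indicator (ball 0 (real n))"
    have Im[measurable]: "I \<in> borel_measurable borel" unfolding I_def
      by (intro borel_measurable_indicator borel_open) auto
    define \<psi> where "\<psi> k = cnj (d k) * complex_of_real (I k)" for k
    have psim[measurable]: "\<psi> \<in> borel_measurable borel" unfolding \<psi>_def by measurable
    have I01: "I k = 0 \<or> I k = 1" for k unfolding I_def by (auto simp: indicator_def)
    have psii: "integrable lborel \<psi>"
    proof (rule Bochner_Integration.integrable_bound[where f="\<lambda>k. ((cmod (d k))^2 + I k) / 2"])
      show "integrable lborel (\<lambda>k. ((cmod (d k))^2 + I k) / 2)"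
        using d2 ball_integrable[of "real n"] unfolding L2_def I_def by auto
      show "AE k in lborel. norm (\<psi> k) \<le> norm (((cmod (d k))^2 + I k) / 2)"
      proof (intro AE_I2)
        fix k
        have "2 * cmod (d k) * 1 \<le> (cmod (d k))^2 + 1^2" by (rule sum_squares_bound)
        then show "norm (\<psi> k) \<le> norm (((cmod (d k))^2 + I k) / 2)"
          using I01[of k] unfolding \<psi>_def by (auto simp: norm_mult)
      qed
    qed measurable
    have psi2: "L2 \<psi>"
    proof -
      have "integrable lborel (\<lambda>k. (cmod (\<psi> k))^2)"
      proof (rule Bochner_Integration.integrable_bound[where f="\<lambda>k. (cmod (d k))^2"])
        show "integrable lborel (\<lambda>k. (cmod (d k))^2)" using d2 unfolding L2_def by auto
        show "AE k in lborel. norm ((cmod (\<psi> k))^2) \<le> norm ((cmod (d k))^2)"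
        proof (intro AE_I2)
          fix k
          show "norm ((cmod (\<psi> k))^2) \<le> norm ((cmod (d k))^2)"
            using I01[of k] by (cases "I k = 0") (auto simp: \<psi>_def norm_mult)
        qed
      qed measurable
      then show ?thesis unfolding L2_def by simp
    qed
    have e1: "(\<integral>k. \<phi>1 k * \<psi> k \<partial>lborel) = (\<integral>x. u x * ft \<psi> x \<partial>lborel)"
      using f1 psii psi2 unfolding is_fourier_L2_def by blast
    have e2: "(\<integral>k. \<phi>2 k * \<psi> k \<partial>lborel) = (\<integral>x. u x * ft \<psi> x \<partial>lborel)"
      using f2 psii psi2 unfolding is_fourier_L2_def by blast
    have i1: "integrable lborel (\<lambda>k. \<phi>1 k * \<psi> k)" by (rule L2_integrable_prod[OF p1 psi2])
    have i2: "integrable lborel (\<lambda>k. \<phi>2 k * \<psi> k)" by (rule L2_integrable_prod[OF p2 psi2])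
    have "(\<integral>k. d k * \<psi> k \<partial>lborel) = 0"
      using e1 e2 i1 i2 unfolding d_def by (simp add: left_diff_distrib)
    moreover have "(\<lambda>k. d k * \<psi> k) = (\<lambda>k. complex_of_real ((cmod (d k))^2 * I k))"
    proof
      fix k
      have "complex_of_real ((cmod (d k))^2 * I k) = complex_of_real ((cmod (d k))^2) * complex_of_real (I k)"
        by (rule of_real_mult)
      also have "\<dots> = d k * cnj (d k) * complex_of_real (I k)" by (simp only: complex_norm_square)
      finally show "d k * \<psi> k = complex_of_real ((cmod (d k))^2 * I k)" unfolding \<psi>_def by (simp only: mult_ac)
    qed
    ultimately have "(\<integral>k. complex_of_real ((cmod (d k))^2 * I k) \<partial>lborel) = 0" by (simp only:)
    then have "complex_of_real (\<integral>k. (cmod (d k))^2 * I k \<partial>lborel) = 0" by (simp only: integral_complex_of_real)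
    then have z: "(\<integral>k. (cmod (d k))^2 * I k \<partial>lborel) = 0" by (simp only: of_real_eq_0_iff)
    have ii: "integrable lborel (\<lambda>k. (cmod (d k))^2 * I k)"
    proof -
      have "integrable lborel (\<lambda>k. d k * \<psi> k)" by (rule L2_integrable_prod[OF d2 psi2])
      then have "integrable lborel (\<lambda>k. complex_of_real ((cmod (d k))^2 * I k))"
        using \<open>(\<lambda>k. d k * \<psi> k) = _\<close> by (simp only:)
      then show ?thesis by (simp only: complex_of_real_integrable_eq)
    qed
    have "AE k in lborel. (cmod (d k))^2 * I k = 0"
      using integral_nonneg_eq_0_iff_AE[OF ii] z I01 by (auto simp: I_def)
    then show ?thesis by eventually_elim (auto simp: I_def)
  qed
  have "AE k in lborel. \<forall>n::nat. k \<in> ball 0 (real n) \<longrightarrow> d k = 0"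
    unfolding AE_all_countable using ball_zero by blast
  then have "AE k in lborel. d k = 0"
  proof eventually_elim
    fix k :: "real \<times> real" assume *: "\<forall>n::nat. k \<in> ball 0 (real n) \<longrightarrow> d k = 0"
    obtain n :: nat where "norm k < real n" using reals_Archimedean2 by blast
    then show "d k = 0" using *[rule_format, of n] by simp
  qed
  then show ?thesis unfolding d_def by simp
qed

lemma gsym_bound:
  fixes x z \<delta> :: real
  assumes d: "0 < \<delta>" "\<delta> \<le> 1"
    and n1: "(x, z) \<notin> ball (1, 0) \<delta>" and n2: "(x, z) \<notin> ball (-1, 0) \<delta>"
    and r: "norm (x, z) > 0"
  shows "gsym (x, z) \<ge> \<delta>^2 / 5 * (1 + (norm (x, z))^2)"
proof -
  define r where "r = norm (x, z)"
  have r0: "r > 0" using r unfolding r_def .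
  have r2: "r^2 = x^2 + z^2" unfolding r_def by (simp add: norm_sq_pair)
  have xr: "\<bar>x\<bar> \<le> r"
  proof (rule power2_le_imp_le)
    show "\<bar>x\<bar>^2 \<le> r^2" using r2 by simp
  qed (use r0 in simp)
  have g: "gsym (x, z) = 1 + r^2 - 2 * x^2 / r" unfolding gsym_def r_def by simp
  have xx: "x^2 / r \<le> \<bar>x\<bar>"
  proof -
    have "x^2 = \<bar>x\<bar> * \<bar>x\<bar>" by (simp add: power2_eq_square)
    also have "\<dots> \<le> \<bar>x\<bar> * r" using xr by (intro mult_left_mono) auto
    finally show ?thesis using r0 by (simp add: divide_le_eq)
  qed
  have dist_sq: "\<delta>^2 \<le> (s - x)^2 + z^2" if "(x, z) \<notin> ball (s, 0) \<delta>" for s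
  proof -
    have "\<delta> \<le> dist (s, 0) (x, z)" using that by (simp add: not_less)
    also have "dist (s, 0) (x, z) = sqrt ((s - x)^2 + z^2)" by (simp add: dist_Pair_Pair dist_real_def)
    finally have "\<delta> \<le> sqrt ((s - x)^2 + z^2)" .
    then have "\<delta>^2 \<le> (sqrt ((s - x)^2 + z^2))^2" using d by (intro power_mono) auto
    then show ?thesis by simp
  qed
  have gd: "gsym (x, z) \<ge> \<delta>^2"
  proof (cases "x \<ge> 0")
    case True
    have "\<delta>^2 \<le> (1 - x)^2 + z^2" using dist_sq[OF n1] .
    also have "\<dots> = 1 - 2 * \<bar>x\<bar> + r^2" using True r2 by (simp add: power2_diff)
    also have "\<dots> \<le> gsym (x, z)" unfolding g using xx by linarith
    finally show ?thesis .
  next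
    case False
    have "\<delta>^2 \<le> (-1 - x)^2 + z^2" using dist_sq[OF n2] .
    also have "\<dots> = 1 - 2 * \<bar>x\<bar> + r^2" using False r2 by (simp add: power2_diff power2_sum algebra_simps)
    also have "\<dots> \<le> gsym (x, z)" unfolding g using xx by linarith
    finally show ?thesis .
  qed
  show ?thesis
  proof (cases "r \<ge> 2")
    case True
    have "x^2 / r \<le> r" using xx xr by linarith
    then have "gsym (x, z) \<ge> 1 + r^2 - 2 * r" unfolding g by linarith
    moreover have "5 * (1 + r^2 - 2 * r) \<ge> 1 + r^2"
    proof -
      have "0 \<le> (2 * r - 1) * (r - 2)" using True by simp
      then show ?thesis by (simp add: algebra_simps power2_eq_square)
    qed
    moreover have "1 + r^2 - 2 * r \<le> gsym (x, z) \<Longrightarrow> 5 * (1 + r^2 - 2 * r) \<le> 5 * gsym (x, z)" by simp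
    ultimately have "1 + r^2 \<le> 5 * gsym (x, z)" by linarith
    then have "gsym (x, z) \<ge> (1 + r^2) / 5" by (simp add: divide_le_eq mult.commute)
    moreover have "\<delta>^2 / 5 * (1 + r^2) \<le> (1 + r^2) / 5"
    proof -
      have "\<delta>^2 \<le> 1" using d by (simp add: power_le_one)
      then have "\<delta>^2 * (1 + r^2) \<le> 1 * (1 + r^2)" by (intro mult_right_mono) auto
      then show ?thesis by simp
    qed
    ultimately show ?thesis unfolding r_def by linarith
  next
    case False
    then have "1 + r^2 \<le> 5"
    proof -
      have "r^2 \<le> 2^2" using False r0 by (intro power_mono) auto
      then show ?thesis by simp
    qed
    then have "\<delta>^2 * (1 + r^2) \<le> \<delta>^2 * 5" by (intro mult_left_mono) auto
    then have "\<delta>^2 / 5 * (1 + r^2) \<le> \<delta>^2" by simp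
    then show ?thesis using gd unfolding r_def by linarith
  qed
qed

lemma multiplier_bound:
  fixes \<delta> :: real
  assumes d: "0 < \<delta>" "\<delta> \<le> 1"
  shows "\<bar>multiplier \<delta> k\<bar> * (1 + (norm k)^2) \<le> 5 / \<delta>^2"
proof -
  obtain x z where k: "k = (x, z)" by (cases k)
  have C: "5 / \<delta>^2 \<ge> 1"
  proof -
    have "\<delta>^2 \<le> 1" using d by (simp add: power_le_one)
    then show ?thesis using d by (simp add: field_simps)
  qed
  show ?thesis
  proof (cases "k \<in> ball (1, 0) \<delta> \<union> ball (-1, 0) \<delta>")
    case True
    then have "multiplier \<delta> k = 0" unfolding multiplier_def chi_def by simp
    then show ?thesis using C by simp
  next
    case False
    then have m: "multiplier \<delta> k = 1 / gsym k" unfolding multiplier_def chi_def by simp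
    show ?thesis
    proof (cases "norm k = 0")
      case True
      then have "k = 0" by simp
      then have "multiplier \<delta> k = 1" unfolding m gsym_def by simp
      then show ?thesis using C \<open>k = 0\<close> by simp
    next
      case False
      have n: "norm (x, z) > 0" using False k by simp
      have gb: "gsym (x, z) \<ge> \<delta>^2 / 5 * (1 + (norm (x, z))^2)"
        using gsym_bound[OF d _ _ n] \<open>k \<notin> _\<close> k by auto
      have pos: "\<delta>^2 / 5 * (1 + (norm (x, z))^2) > 0" using d by (simp add: add_pos_nonneg)
      then have gpos: "gsym (x, z) > 0" using gb by linarith
      have "\<bar>multiplier \<delta> k\<bar> * (1 + (norm k)^2) = (1 + (norm (x, z))^2) / gsym (x, z)"
      proof -
        have m': "multiplier \<delta> (x, z) = 1 / gsym (x, z)" using m k by simp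
        show ?thesis unfolding k m' using gpos by simp
      qed
      also have "\<dots> \<le> (1 + (norm (x, z))^2) / (\<delta>^2 / 5 * (1 + (norm (x, z))^2))"
        using gb pos by (intro divide_left_mono) (auto simp: add_pos_nonneg)
      also have "\<dots> = 5 / \<delta>^2"
      proof -
        have N: "1 + (norm (x, z))^2 \<noteq> 0" using zero_le_power2[of "norm (x, z)"] by linarith
        have D: "\<delta>^2 \<noteq> 0" using d by simp
        have "(1 + (norm (x, z))^2) / (\<delta>^2 / 5 * (1 + (norm (x, z))^2)) = 1 / (\<delta>^2 / 5)"
          by (rule nonzero_divide_mult_cancel_right[OF N])
        then show ?thesis by simp
      qed
      finally show ?thesis .
    qed
  qed
qed

lemma inv_1sq_integrable: "integrable lborel (\<lambda>x::real. inverse (1 + x^2))"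
proof -
  have "set_integrable lborel (einterval (-\<infinity>) \<infinity>) (\<lambda>x::real. inverse (1 + x^2))"
    by (rule integrable_inverse_1_plus_square)
  moreover have "einterval (-\<infinity>) \<infinity> = (UNIV :: real set)" by (auto simp: einterval_def)
  ultimately show ?thesis unfolding set_integrable_def by simp
qed

lemma inv_sq_integrable: "integrable lborel (\<lambda>k::real\<times>real. 1 / (1 + (norm k)^2)^2)"
proof (rule Bochner_Integration.integrable_bound[where f="\<lambda>k. inverse (1 + (fst k)^2) * inverse (1 + (snd k)^2)"])
  show "integrable lborel (\<lambda>k::real\<times>real. inverse (1 + (fst k)^2) * inverse (1 + (snd k)^2))"
    by (intro integrable_mult_lborel(1) inv_1sq_integrable)
  have pw: "norm (1 / (1 + (norm k)^2)^2) \<le> norm (inverse (1 + (fst k)^2) * inverse (1 + (snd k)^2))" for k :: "real \<times> real"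
  proof -
    have pos: "(1 + (fst k)^2) * (1 + (snd k)^2) > 0" by (simp add: add_pos_nonneg)
    have le: "(1 + (fst k)^2) * (1 + (snd k)^2) \<le> (1 + (norm k)^2)^2"
    proof -
      have "(1 + (fst k)^2) * (1 + (snd k)^2) = 1 + (fst k)^2 + (snd k)^2 + (fst k)^2 * (snd k)^2"
        by (simp add: algebra_simps)
      also have "\<dots> \<le> (1 + ((fst k)^2 + (snd k)^2))^2"
      proof -
        have g: "1 + a + b + a * b \<le> (1 + (a + b))^2" if "a \<ge> 0" "b \<ge> 0" for a b :: real
        proof -
          have "0 \<le> a + b + a*a + a*b + b*b" using that by (simp add: add_nonneg_nonneg mult_nonneg_nonneg)
          moreover have "(1 + (a + b))^2 = 1 + a + b + a*b + (a + b + a*a + a*b + b*b)"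
            by (simp add: power2_eq_square algebra_simps)
          ultimately show ?thesis by linarith
        qed
        show ?thesis by (rule g) auto
      qed
      finally show ?thesis by (simp add: norm_sq_pair)
    qed
    have "1 / (1 + (norm k)^2)^2 \<le> 1 / ((1 + (fst k)^2) * (1 + (snd k)^2))"
      using le_imp_inverse_le[OF le pos] by (simp add: divide_inverse)
    then show "norm (1 / (1 + (norm k)^2)^2) \<le> norm (inverse (1 + (fst k)^2) * inverse (1 + (snd k)^2))"
      by (simp add: divide_inverse inverse_mult_distrib add_pos_nonneg abs_of_pos)
  qed
  then show "AE k in lborel. norm (1 / (1 + (norm k)^2)^2) \<le> norm (inverse (1 + (fst (k::real\<times>real))^2) * inverse (1 + (snd k)^2))"
    by simp
qed measurable

lemma powr_half_sq: "(x::real) > 0 \<Longrightarrow> (x powr (1/2))^2 = x"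
  by (simp add: power2_eq_square powr_add[symmetric])

lemma powr_32_sq: "(x::real) > 0 \<Longrightarrow> (x powr (3/2))^2 = x^3"
proof -
  assume x: "x > 0"
  have "(x powr (3/2))^2 = x powr (3/2) * x powr (3/2)" by (simp add: power2_eq_square)
  also have "\<dots> = x powr (3/2 + 3/2)" by (rule powr_add[symmetric])
  also have "\<dots> = x powr 3" by simp
  also have "\<dots> = x^3" using x by simp
  finally show ?thesis .
qed

lemma cmod_ofreal_sq: "(cmod (complex_of_real p * z))^2 = p^2 * (cmod z)^2"
  by (simp add: norm_mult power_mult_distrib)

lemma multiplier_measurable[measurable]: "multiplier \<delta> \<in> borel_measurable borel"
proof -
  have [measurable]: "ball (1::real, 0::real) \<delta> \<union> ball (-1, 0) \<delta> \<in> sets borel" by auto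
  show ?thesis unfolding multiplier_def[abs_def] chi_def gsym_def by measurable
qed

theorem proposition3p1:
  fixes \<delta> :: real
  assumes "0 < \<delta>" and "\<delta> < 1/5"
  shows "\<exists>C. \<forall>f \<in> sobolev_space 1. \<exists>u \<in> sobolev_space 3.
           is_fourier_L2 u (\<lambda>k. complex_of_real (multiplier \<delta> k) * fourier_L2 f k) \<and>
           sobolev_norm 3 u \<le> C * sobolev_norm 1 f"
proof -
  define C where "C = 5 / \<delta>^2"
  have d1: "\<delta> \<le> 1" using assms by simp
  have mb: "\<bar>multiplier \<delta> k\<bar> * (1 + (norm k)^2) \<le> C" for k
    using multiplier_bound[OF assms(1) d1] unfolding C_def .
  have C0: "C \<ge> 0" unfolding C_def by simp
  have np: "1 + (norm (k::real\<times>real))^2 > 0" for k using zero_le_power2[of "norm k"] by linarith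
  have mC: "\<bar>multiplier \<delta> k\<bar> \<le> C" for k
  proof -
    have "\<bar>multiplier \<delta> k\<bar> * 1 \<le> \<bar>multiplier \<delta> k\<bar> * (1 + (norm k)^2)" by (intro mult_left_mono) auto
    then show ?thesis using mb[of k] by simp
  qed
  show ?thesis
  proof (intro exI[of _ C] ballI)
    fix f assume f: "f \<in> sobolev_space 1"
    obtain \<phi>0 where F0: "is_fourier_L2 f \<phi>0" and W0: "L2 (\<lambda>k. complex_of_real ((1 + (norm k)^2) powr (1/2)) * \<phi>0 k)"
      using f unfolding sobolev_space_def by auto
    define \<phi> where "\<phi> = fourier_L2 f"
    have F: "is_fourier_L2 f \<phi>" unfolding \<phi>_def fourier_L2_def using someI[of "is_fourier_L2 f" \<phi>0, OF F0] .
    have ae: "AE k in lborel. \<phi> k = \<phi>0 k" by (rule fourier_unique[OF F F0])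
    have pL2: "L2 \<phi>" using F unfolding is_fourier_L2_def by auto
    have p0L2: "L2 \<phi>0" using F0 unfolding is_fourier_L2_def by auto
    have pm[measurable]: "\<phi> \<in> borel_measurable borel" using pL2 unfolding L2_def by auto
    have p0m[measurable]: "\<phi>0 \<in> borel_measurable borel" using p0L2 unfolding L2_def by auto
    have pi2: "integrable lborel (\<lambda>k. (cmod (\<phi> k))^2)" using pL2 unfolding L2_def by auto
    have W1: "integrable lborel (\<lambda>k. (1 + (norm k)^2) * (cmod (\<phi> k))^2)"
    proof -
      have "integrable lborel (\<lambda>k. (cmod (complex_of_real ((1 + (norm k)^2) powr (1/2)) * \<phi>0 k))^2)"
        using W0 unfolding L2_def by auto
      then have i0: "integrable lborel (\<lambda>k. (1 + (norm k)^2) * (cmod (\<phi>0 k))^2)"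
        unfolding cmod_ofreal_sq powr_half_sq[OF np] .
      have a0: "AE k in lborel. (1 + (norm k)^2) * (cmod (\<phi>0 k))^2 = (1 + (norm k)^2) * (cmod (\<phi> k))^2"
        using ae by eventually_elim simp
      show ?thesis
        by (rule integrable_cong_AE_imp[OF i0 _ a0]) measurable
    qed
    define \<Phi> where "\<Phi> k = complex_of_real (multiplier \<delta> k) * \<phi> k" for k
    have Pm[measurable]: "\<Phi> \<in> borel_measurable borel" unfolding \<Phi>_def[abs_def] by measurable
    have P3: "(1 + (norm k)^2)^3 * (cmod (\<Phi> k))^2 \<le> C^2 * ((1 + (norm k)^2) * (cmod (\<phi> k))^2)" for k
    proof -
      have "(\<bar>multiplier \<delta> k\<bar> * (1 + (norm k)^2))^2 \<le> C^2"
        using mb[of k] by (intro power_mono) auto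
      then have "(multiplier \<delta> k)^2 * (1 + (norm k)^2)^2 * ((1 + (norm k)^2) * (cmod (\<phi> k))^2) \<le> C^2 * ((1 + (norm k)^2) * (cmod (\<phi> k))^2)"
        using np[of k] by (intro mult_right_mono) (auto simp: power_mult_distrib)
      then show ?thesis unfolding \<Phi>_def cmod_ofreal_sq by (simp add: power2_eq_square power3_eq_cube mult_ac)
    qed
    have PL2: "L2 \<Phi>"
    proof -
      have "integrable lborel (\<lambda>k. (cmod (\<Phi> k))^2)"
      proof (rule Bochner_Integration.integrable_bound[where f="\<lambda>k. C^2 * (cmod (\<phi> k))^2"])
        show "integrable lborel (\<lambda>k. C^2 * (cmod (\<phi> k))^2)" using pi2 by auto
        show "AE k in lborel. norm ((cmod (\<Phi> k))^2) \<le> norm (C^2 * (cmod (\<phi> k))^2)"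
        proof (intro AE_I2)
          fix k
          have "(multiplier \<delta> k)^2 \<le> C^2" using mC[of k] by (metis abs_le_square_iff abs_of_nonneg C0)
          then have "(multiplier \<delta> k)^2 * (cmod (\<phi> k))^2 \<le> C^2 * (cmod (\<phi> k))^2" by (intro mult_right_mono) auto
          then show "norm ((cmod (\<Phi> k))^2) \<le> norm (C^2 * (cmod (\<phi> k))^2)" unfolding \<Phi>_def cmod_ofreal_sq by simp
        qed
      qed measurable
      then show ?thesis unfolding L2_def by simp
    qed
    have Pi: "integrable lborel \<Phi>"
    proof (rule Bochner_Integration.integrable_bound[where f="\<lambda>k. C * (((cmod (\<phi> k))^2 + 1 / (1 + (norm k)^2)^2) / 2)"])
      show "integrable lborel (\<lambda>k. C * (((cmod (\<phi> k))^2 + 1 / (1 + (norm k)^2)^2) / 2))"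
        using pi2 inv_sq_integrable by auto
      show "AE k in lborel. norm (\<Phi> k) \<le> norm (C * (((cmod (\<phi> k))^2 + 1 / (1 + (norm k)^2)^2) / 2))"
      proof (intro AE_I2)
        fix k :: "real \<times> real"
        have m1: "\<bar>multiplier \<delta> k\<bar> \<le> C / (1 + (norm k)^2)" using mb[of k] np[of k] by (simp add: field_simps)
        have "norm (\<Phi> k) = \<bar>multiplier \<delta> k\<bar> * cmod (\<phi> k)" unfolding \<Phi>_def by (simp add: norm_mult)
        also have "\<dots> \<le> C / (1 + (norm k)^2) * cmod (\<phi> k)" using m1 by (intro mult_right_mono) auto
        also have "\<dots> = C * (cmod (\<phi> k) * (1 / (1 + (norm k)^2)))" by simp
        also have "\<dots> \<le> C * (((cmod (\<phi> k))^2 + (1 / (1 + (norm k)^2))^2) / 2)"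
        proof (intro mult_left_mono C0)
          have "2 * cmod (\<phi> k) * (1 / (1 + (norm k)^2)) \<le> (cmod (\<phi> k))^2 + (1 / (1 + (norm k)^2))^2"
            by (rule sum_squares_bound)
          then show "cmod (\<phi> k) * (1 / (1 + (norm k)^2)) \<le> ((cmod (\<phi> k))^2 + (1 / (1 + (norm k)^2))^2) / 2" by (simp add: mult.commute)
        qed
        also have "\<dots> = C * (((cmod (\<phi> k))^2 + 1 / (1 + (norm k)^2)^2) / 2)" by (simp add: power_divide)
        finally show "norm (\<Phi> k) \<le> norm (C * (((cmod (\<phi> k))^2 + 1 / (1 + (norm k)^2)^2) / 2))"
          using C0 by simp
      qed
    qed measurable
    define u where "u = ft (\<lambda>k. \<Phi> (- k))"
    have Pri: "integrable lborel (\<lambda>k. \<Phi> (- k))" using Pi by (simp add: integrable_reflect_iff[where f=\<Phi>])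
    have PrL2: "L2 (\<lambda>k. \<Phi> (- k))" by (rule L2_reflect[OF PL2])
    have uL2: "L2 u" unfolding u_def by (rule plancherel(1)[OF Pri PrL2])
    have Fu: "is_fourier_L2 u \<Phi>"
      unfolding is_fourier_L2_def u_def using uL2 PL2 inversion[OF Pi PL2] unfolding u_def by blast
    have W3i: "integrable lborel (\<lambda>k. (1 + (norm k)^2)^3 * (cmod (\<Phi> k))^2)"
    proof (rule Bochner_Integration.integrable_bound[where f="\<lambda>k. C^2 * ((1 + (norm k)^2) * (cmod (\<phi> k))^2)"])
      show "integrable lborel (\<lambda>k. C^2 * ((1 + (norm k)^2) * (cmod (\<phi> k))^2))" using W1 by auto
      show "AE k in lborel. norm ((1 + (norm k)^2)^3 * (cmod (\<Phi> k))^2) \<le> norm (C^2 * ((1 + (norm k)^2) * (cmod (\<phi> k))^2))"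
        using P3 np by (intro AE_I2) (simp add: abs_mult)
    qed measurable
    have W3: "L2 (\<lambda>k. complex_of_real ((1 + (norm k)^2) powr (3/2)) * \<Phi> k)"
      unfolding L2_def cmod_ofreal_sq powr_32_sq[OF np]
    proof (intro conjI W3i)
      show "(\<lambda>k. complex_of_real ((1 + (norm k)^2) powr (3 / 2)) * \<Phi> k) \<in> borel_measurable lborel"
        by measurable
    qed
    have FuF: "is_fourier_L2 u (fourier_L2 u)" unfolding fourier_L2_def using someI[of "is_fourier_L2 u" \<Phi>, OF Fu] .
    have aeu: "AE k in lborel. fourier_L2 u k = \<Phi> k" by (rule fourier_unique[OF FuF Fu])
    have fum[measurable]: "fourier_L2 u \<in> borel_measurable borel" using FuF unfolding is_fourier_L2_def L2_def by auto
    show "\<exists>u \<in> sobolev_space 3. is_fourier_L2 u (\<lambda>k. complex_of_real (multiplier \<delta> k) * fourier_L2 f k) \<and>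
           sobolev_norm 3 u \<le> C * sobolev_norm 1 f"
    proof (intro bexI[of _ u] conjI)
      show "u \<in> sobolev_space 3" unfolding sobolev_space_def using uL2 Fu W3 by auto
      show "is_fourier_L2 u (\<lambda>k. complex_of_real (multiplier \<delta> k) * fourier_L2 f k)"
        using Fu unfolding \<Phi>_def[abs_def] \<phi>_def .
      have I3: "(\<integral>k. (1 + (norm k)^2) powr 3 * (cmod (fourier_L2 u k))^2 \<partial>lborel) = (\<integral>k. (1 + (norm k)^2)^3 * (cmod (\<Phi> k))^2 \<partial>lborel)"
      proof (rule integral_cong_AE)
        show "AE k in lborel. (1 + (norm k)^2) powr 3 * (cmod (fourier_L2 u k))^2 = (1 + (norm k)^2)^3 * (cmod (\<Phi> k))^2"
          using aeu by eventually_elim (use np in simp)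
      qed measurable
      have I1: "(\<integral>k. (1 + (norm k)^2) powr 1 * (cmod (fourier_L2 f k))^2 \<partial>lborel) = (\<integral>k. (1 + (norm k)^2) * (cmod (\<phi> k))^2 \<partial>lborel)"
        unfolding \<phi>_def using np by (simp add: powr_one)
      have "(\<integral>k. (1 + (norm k)^2)^3 * (cmod (\<Phi> k))^2 \<partial>lborel) \<le> (\<integral>k. C^2 * ((1 + (norm k)^2) * (cmod (\<phi> k))^2) \<partial>lborel)"
        using W3i W1 P3 by (intro integral_mono) auto
      also have "\<dots> = C^2 * (\<integral>k. (1 + (norm k)^2) * (cmod (\<phi> k))^2 \<partial>lborel)" by simp
      finally have le: "(\<integral>k. (1 + (norm k)^2)^3 * (cmod (\<Phi> k))^2 \<partial>lborel) \<le> C^2 * (\<integral>k. (1 + (norm k)^2) * (cmod (\<phi> k))^2 \<partial>lborel)" .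
      have "sobolev_norm 3 u = sqrt (\<integral>k. (1 + (norm k)^2)^3 * (cmod (\<Phi> k))^2 \<partial>lborel)"
        unfolding sobolev_norm_def I3 ..
      also have "\<dots> \<le> sqrt (C^2 * (\<integral>k. (1 + (norm k)^2) * (cmod (\<phi> k))^2 \<partial>lborel))"
        using le by (rule real_sqrt_le_mono)
      also have "\<dots> = C * sqrt (\<integral>k. (1 + (norm k)^2) * (cmod (\<phi> k))^2 \<partial>lborel)"
        using C0 by (simp add: real_sqrt_mult)
      also have "\<dots> = C * sobolev_norm 1 f" unfolding sobolev_norm_def I1 ..
      finally show "sobolev_norm 3 u \<le> C * sobolev_norm 1 f" .
    qed
  qed
qed

end
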